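(* Let $(b_k)_{k\ge 1}$ and $(d_k)_{k\ge 1}$ be the real coefficients for which $$\left(1+\frac{1}{x}\right)^x = e\left(1-\sum_{k=1}^{\infty}\frac{b_k}{(1+x)^k}\right) = e\left(1-\sum_{k=1}^{\infty}\frac{d_k}{\left(x+\tfrac{11}{12}\right)^k}\right),\qquad x>0,$$ and for each integer $m\ge 1$ and real $x>0$ define the partial sums $$\sigma_m(x):=\sum_{k=1}^{m}\frac{b_k}{(1+x)^k},\qquad S_m(x):=\sum_{k=1}^{m}\frac{d_k}{\left(x+\tfrac{11}{12}\right)^k}.$$ Then $S_m(x)>\sigma_m(x)$ for all real $x>0$ and all integers $m\ge 1$.
   Context: Explicitly, the coefficients are given as follows. Let $g:[0,1]\to\mathbb{R}$ be $g(s)=\frac{1}{\pi}s^s(1-s)^{1-s}\sin(\pi s)$ for $0<s<1$ and $g(0)=g(1)=0$. Then $b_1=\tfrac12$ and $b_{n+1}=\frac{1}{n+1}\left(\frac{1}{n+2}-\sum_{j=1}^{n}\frac{b_j}{n+2-j}\right)$ for $n\ge1$; equivalently $e\,b_k=\int_0^1 g(s)s^{k-2}\,ds$ for $k\ge 2$ (so $b_2=\tfrac1{24}$, $b_3=\tfrac1{48}$, $b_4=\tfrac{73}{5670}$). Also $d_1=\tfrac12$ and $d_n=\frac{1}{12^{n-1}e}\left((-1)^{n-1}+\int_0^1\frac{(12t-1)^{n-1}}{t}g(t)\,dt\right)$ for $n\ge 2$ (so $d_2=0$, $d_3=\tfrac{5}{288}$, $d_4=\tfrac{139}{17280}$). Here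 $e$ is Euler's number. *)

theory Defs
  imports "HOL-Analysis.Analysis"
begin

definition gfun :: "real \<Rightarrow> real" where
  "gfun s = (if 0 < s \<and> s < 1
     then (1/pi) * s powr s * (1 - s) powr (1 - s) * sin (pi * s) else 0)"

fun bcoef :: "nat \<Rightarrow> real" where
  "bcoef 0 = 0"
| "bcoef (Suc 0) = 1/2"
| "bcoef (Suc (Suc n)) =
     (1 / real (n + 2)) * (1 / real (n + 3)
       - (\<Sum>j\<in>{1..n+1}. bcoef j / (real (n + 3) - real j)))"

definition dcoef :: "nat \<Rightarrow> real" where
  "dcoef n = (if n = 0 then 0 else if n = 1 then 1/2 else
     (1 / (12 ^ (n - 1) * exp 1)) *
       ((-1) ^ (n - 1) + integral {0..1} (\<lambda>t. (12 * t - 1) ^ (n - 1) / t * gfun t)))"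

end

theory Submission
  imports Defs "HOL-Complex_Analysis.Complex_Analysis" "HOL-Real_Asymp.Real_Asymp"
begin

lemma bcoef_bound: "n \<ge> 1 \<Longrightarrow> \<bar>bcoef n\<bar> \<le> 1/2"
proof (induction n rule: less_induct)
  case (less n)
  show ?case
  proof (cases "n = 1")
    case True then show ?thesis by simp
  next
    case False
    have "n \<ge> 2" using False less.prems by linarith
    then obtain m where n: "n = Suc (Suc m)" by (metis add_2_eq_Suc le_Suc_ex)
    define S where "S = (\<Sum>j\<in>{1..m+1}. bcoef j / (real (m + 3) - real j))"
    have t: "\<bar>bcoef j / (real (m + 3) - real j)\<bar> \<le> 1/4" if j: "j \<in> {1..m+1}" for j
    proof -
      have b: "\<bar>bcoef j\<bar> \<le> 1/2" using less.IH[of j] j n by auto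
      have d: "real (m + 3) - real j \<ge> 2" using j by auto
      have "\<bar>bcoef j / (real (m + 3) - real j)\<bar> = \<bar>bcoef j\<bar> / (real (m + 3) - real j)"
        using d by (simp add: abs_divide)
      also have "\<dots> \<le> 1/4" using b d by (simp add: pos_divide_le_eq)
      finally show ?thesis .
    qed
    have "\<bar>S\<bar> \<le> (\<Sum>j\<in>{1..m+1}. 1/4)"
      unfolding S_def by (rule order_trans[OF sum_abs]) (rule sum_mono[OF t])
    also have "\<dots> = (real m + 1)/4" by simp
    finally have s: "\<bar>S\<bar> \<le> (real m + 1)/4" .
    have q: "1 / real (m + 3) \<le> 1/3" by (simp add: divide_le_eq)
    have q0: "0 \<le> 1 / real (m + 3)" by simp
    have "\<bar>1 / real (m + 3) - S\<bar> \<le> \<bar>1 / real (m + 3)\<bar> + \<bar>S\<bar>"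
      by (rule abs_triangle_ineq4)
    then have tri: "\<bar>1 / real (m + 3) - S\<bar> \<le> 1 / real (m + 3) + \<bar>S\<bar>" using q0 by simp
    have "1 / real (m + 3) + \<bar>S\<bar> \<le> 1/3 + (real m + 1) / 4" by (rule add_mono[OF q s])
    also have "\<dots> \<le> (real m + 2) / 2" by (simp add: field_simps)
    finally have "\<bar>1 / real (m + 3) - S\<bar> \<le> (real m + 2) / 2" using tri by linarith
    then have X: "\<bar>1 / real (m + 3) - S\<bar> / real (m + 2) \<le> 1/2"
      by (simp add: pos_divide_le_eq)
    have "bcoef n = (1 / real (m + 2)) * (1 / real (m + 3) - S)"
      unfolding n S_def by (rule bcoef.simps(3))
    then have "\<bar>bcoef n\<bar> = \<bar>1 / real (m + 3) - S\<bar> / real (m + 2)"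
      by (simp only: abs_mult abs_divide abs_one abs_of_nat) simp
    then show ?thesis using X by simp
  qed
qed

definition ecoef :: "nat \<Rightarrow> real" where "ecoef n = (if n = 0 then 1 else - bcoef n)"

lemma ecoef_bound: "\<bar>ecoef n\<bar> \<le> 1"
  using bcoef_bound[of n] by (auto simp: ecoef_def)

lemma ecoef_rec: "real (Suc n) * ecoef (Suc n) = - (\<Sum>i\<le>n. ecoef i / (real n + 2 - real i))"
proof (cases n)
  case 0 then show ?thesis by (simp add: ecoef_def)
next
  case (Suc k)
  have "(\<Sum>i\<le>n. ecoef i / (real n + 2 - real i)) = ecoef 0 / (real n + 2) + (\<Sum>i\<le>k. ecoef (Suc i) / (real n + 2 - real (Suc i)))"
    unfolding Suc by (subst sum.atMost_Suc_shift) simp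
  also have "(\<Sum>i\<le>k. ecoef (Suc i) / (real n + 2 - real (Suc i))) = - (\<Sum>j\<in>{1..k+1}. bcoef j / (real (k + 3) - real j))"
  proof -
    have "(\<Sum>j\<in>{1..k+1}. bcoef j / (real (k + 3) - real j)) = (\<Sum>i\<in>{0..k}. bcoef (Suc i) / (real (k + 3) - real (Suc i)))"
      by (subst sum.shift_bounds_cl_Suc_ivl[symmetric]) simp
    also have "\<dots> = (\<Sum>i\<le>k. bcoef (Suc i) / (real (k + 3) - real (Suc i)))" by (simp add: atLeast0AtMost)
    finally show ?thesis by (simp add: Suc ecoef_def sum_negf[symmetric])
  qed
  finally have e0: "(\<Sum>i\<le>n. ecoef i / (real n + 2 - real i)) = ecoef 0 / (real n + 2) + - (\<Sum>j\<in>{1..k+1}. bcoef j / (real (k + 3) - real j))" .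
  have e1: "ecoef 0 / (real n + 2) = 1 / (real k + 3)" by (simp add: ecoef_def Suc)
  have e: "(\<Sum>i\<le>n. ecoef i / (real n + 2 - real i)) = 1 / (real k + 3) - (\<Sum>j\<in>{1..k+1}. bcoef j / (real (k + 3) - real j))"
    using e0 e1 by linarith
  have "ecoef (Suc n) = - bcoef (Suc (Suc k))" by (simp add: ecoef_def Suc del: bcoef.simps)
  moreover have "real (Suc n) = real k + 2" by (simp add: Suc)
  ultimately have "real (Suc n) * ecoef (Suc n) = - (real k + 2) * bcoef (Suc (Suc k))" by (simp del: bcoef.simps add: algebra_simps)
  also have "\<dots> = - (1 / (real k + 3) - (\<Sum>j\<in>{1..k+1}. bcoef j / (real (k + 3) - real j)))"
  proof -
    have *: "- (real k + 2) * ((1 / real (k + 2)) * (1 / real (k + 3) - S)) = - (1 / (real k + 3) - S)" for S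
    proof -
      have a: "real (k+2) = real k + 2" "real (k+3) = real k + 3" by simp_all
      have nz: "real k + 2 \<noteq> 0" using of_nat_0_le_iff[of k, where 'a=real] by linarith
      have o: "(real k + 2) * (1 / (real k + 2)) = 1" using nz by simp
      show ?thesis unfolding a by (simp only: mult_minus_left mult.assoc[symmetric] o mult_1)
    qed
    show ?thesis by (subst bcoef.simps(3)) (rule *)
  qed
  finally show ?thesis using e by (simp del: bcoef.simps)
qed

definition Pf :: "complex fps" where "Pf = Abs_fps (\<lambda>n. of_real (ecoef n))"
definition Bf :: "complex fps" where "Bf = Abs_fps (\<lambda>n. 1 / of_nat (n+2))"
definition Af :: "complex fps" where "Af = Abs_fps (\<lambda>n. if n = 0 then 0 else 1 / (of_nat n * of_nat (n+1)))"

lemma Af_deriv: "fps_deriv Af = Bf"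
proof (subst fps_eq_iff, intro allI)
  fix n
  have nz: "(of_nat n + 1 :: complex) \<noteq> 0" "(of_nat n + 2 :: complex) \<noteq> 0"
    by (metis of_nat_Suc of_nat_eq_0_iff nat.distinct(1) add.commute) (metis of_nat_numeral of_nat_add of_nat_eq_0_iff add_is_0 zero_neq_numeral)
  have "fps_deriv Af $ n = (of_nat n + 1) * (1 / ((of_nat n + 1) * (of_nat n + 2)))"
    by (simp add: Af_def fps_deriv_nth add_ac)
  also have "\<dots> = 1 / (of_nat n + 2)" by (simp only: times_divide_eq_right nonzero_mult_divide_mult_cancel_left[OF nz(1)])
  also have "\<dots> = Bf $ n" by (simp add: Bf_def add_ac)
  finally show "fps_deriv Af $ n = Bf $ n" .
qed

lemma Pf_deriv: "fps_deriv Pf = - (Pf * Bf)"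
proof (subst fps_eq_iff, intro allI)
  fix n
  have "fps_deriv Pf $ n = of_real (real (Suc n) * ecoef (Suc n))"
    by (simp add: Pf_def fps_deriv_nth)
  also have "\<dots> = of_real (- (\<Sum>i\<le>n. ecoef i / (real n + 2 - real i)))" by (subst ecoef_rec) simp
  also have "\<dots> = - (\<Sum>i\<le>n. of_real (ecoef i) / of_real (real n + 2 - real i))"
    by (simp only: of_real_minus of_real_sum of_real_divide)
  also have "\<dots> = - (\<Sum>i=0..n. of_real (ecoef i) * (1 / of_nat (n - i + 2)))"
    unfolding atLeast0AtMost
  proof (intro arg_cong[where f=uminus] sum.cong refl)
    fix i assume "i \<in> {..n}"
    then have "real n + 2 - real i = real (n - i + 2)" by (simp add: of_nat_diff)
    then show "of_real (ecoef i) / of_real (real n + 2 - real i) = of_real (ecoef i) * (1 / (of_nat (n - i + 2) :: complex))"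
      by (metis divide_inverse mult_1 of_real_of_nat_eq)
  qed
  also have "\<dots> = (- (Pf * Bf)) $ n" by (simp add: fps_mult_nth Pf_def Bf_def)
  finally show "fps_deriv Pf $ n = (- (Pf * Bf)) $ n" .
qed

lemma conv_radius_bounded:
  fixes f :: "nat \<Rightarrow> complex"
  assumes "\<And>n. norm (f n) \<le> 1"
  shows "fps_conv_radius (Abs_fps f) \<ge> 1"
  unfolding fps_conv_radius_def fps_nth_Abs_fps
proof (rule conv_radius_geI_ex')
  fix r :: real assume r: "0 < r" "ereal r < 1"
  then have r1: "r < 1" by simp
  show "summable (\<lambda>n. f n * of_real r ^ n)"
  proof (rule summable_norm_cancel, rule summable_comparison_test'[of "\<lambda>n. r ^ n"])
    show "summable (\<lambda>n. r ^ n)" using r r1 by (intro summable_geometric) simp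
    fix n show "norm (norm (f n * of_real r ^ n)) \<le> r ^ n"
      using assms[of n] r by (simp add: norm_mult norm_power mult_left_le_one_le)
  qed
qed

lemma Pf_radius: "fps_conv_radius Pf \<ge> 1"
  unfolding Pf_def by (rule conv_radius_bounded) (use ecoef_bound in auto)
lemma Bf_radius: "fps_conv_radius Bf \<ge> 1"
  unfolding Bf_def
proof (rule conv_radius_bounded)
  fix n
  have "norm (1 / (of_nat (n+2)::complex)) = 1 / real (n+2)" by (simp only: norm_divide norm_one norm_of_nat)
  then show "norm (1 / (of_nat (n+2)::complex)) \<le> 1" by simp
qed
lemma Af_radius: "fps_conv_radius Af \<ge> 1"
  unfolding Af_def
proof (rule conv_radius_bounded)
  fix n
  show "norm (if n = 0 then 0 else 1 / (of_nat n * of_nat (n+1)) :: complex) \<le> 1"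
  proof (cases "n = 0")
    case False
    have "norm (1 / (of_nat n * of_nat (n+1)) :: complex) = 1 / (real n * real (n+1))"
      by (simp only: norm_divide norm_one norm_mult norm_of_nat)
    also have "\<dots> \<le> 1"
    proof -
      have a: "real n \<ge> 1" "real (n+1) \<ge> 1" using False by auto
      have "real n * real (n+1) \<ge> 1 * 1" by (rule mult_mono) (use a in auto)
      then show ?thesis by simp
    qed
    finally show ?thesis using False by simp
  qed simp
qed

lemma in_radius: "norm u < 1 \<Longrightarrow> fps_conv_radius F \<ge> 1 \<Longrightarrow> ereal (norm u) < fps_conv_radius F"
proof -
  assume a: "norm u < 1" "fps_conv_radius F \<ge> 1"
  have "ereal (norm u) < 1" using a(1) by simp
  then show ?thesis using a(2) by (rule less_le_trans)
qed

lemma Pf_exp: assumes "norm u < 1" shows "eval_fps Pf u = exp (- eval_fps Af u)"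
proof -
  define F where "F = (\<lambda>u. eval_fps Pf u * exp (eval_fps Af u))"
  have "\<exists>c. \<forall>x\<in>ball 0 1. F x = c"
  proof (rule has_field_derivative_zero_constant)
    fix x :: complex assume x: "x \<in> ball 0 1"
    then have nx: "norm x < 1" by simp
    have rP: "ereal (norm x) < fps_conv_radius Pf" by (rule in_radius[OF nx Pf_radius])
    have rA: "ereal (norm x) < fps_conv_radius Af" by (rule in_radius[OF nx Af_radius])
    have rB: "ereal (norm x) < fps_conv_radius Bf" by (rule in_radius[OF nx Bf_radius])
    have dP: "(eval_fps Pf has_field_derivative eval_fps (fps_deriv Pf) x) (at x within ball 0 1)"
      by (rule has_field_derivative_eval_fps[OF rP])
    have dA: "(eval_fps Af has_field_derivative eval_fps (fps_deriv Af) x) (at x within ball 0 1)"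
      by (rule has_field_derivative_eval_fps[OF rA])
    have "(F has_field_derivative (eval_fps (fps_deriv Pf) x * exp (eval_fps Af x) + exp (eval_fps Af x) * eval_fps (fps_deriv Af) x * eval_fps Pf x)) (at x within ball 0 1)"
      unfolding F_def by (rule DERIV_mult[OF dP DERIV_chain2[OF DERIV_exp dA]])
    also have "eval_fps (fps_deriv Pf) x = - (eval_fps Pf x * eval_fps Bf x)"
    proof -
      have "ereal (norm x) < min (fps_conv_radius Pf) (fps_conv_radius Bf)" using rP rB by simp
      then have "ereal (norm x) < fps_conv_radius (Pf * Bf)"
        using fps_conv_radius_mult[of Pf Bf] by (rule less_le_trans)
      then show ?thesis using rP rB by (simp only: Pf_deriv eval_fps_minus eval_fps_mult)
    qed
    also have "eval_fps (fps_deriv Af) x = eval_fps Bf x" by (simp add: Af_deriv)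
    finally show "(F has_field_derivative 0) (at x within ball 0 1)" by (simp add: algebra_simps)
  qed simp
  then obtain c where c: "\<And>x. x \<in> ball 0 1 \<Longrightarrow> F x = c" by blast
  have "F 0 = 1" by (simp add: F_def eval_fps_at_0 Pf_def Af_def ecoef_def)
  then have "c = 1" using c[of 0] by simp
  then have "F u = 1" using c[of u] assms by simp
  then show ?thesis unfolding F_def by (simp add: exp_minus field_simps)
qed

lemma Af_Ln: assumes "norm u < 1" "u \<noteq> 0"
  shows "eval_fps Af u = 1 - (1 - 1/u) * Ln (1 - u)"
proof -
  define L where "L = Ln (1 - u)"
  have s1: "(\<lambda>n. - (u ^ n) / of_nat n) sums L"
    using Ln_series'[of "-u"] assms unfolding L_def by simp
  then have s2: "(\<lambda>n. u ^ n / of_nat n) sums (- L)"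
    using sums_minus by fastforce
  then have "(\<lambda>n. u ^ Suc n / of_nat (Suc n)) sums (- L)"
    by (subst sums_Suc_iff) simp
  then have "(\<lambda>n. (1/u) * (u ^ Suc n / of_nat (Suc n))) sums ((1/u) * (- L))"
    by (rule sums_mult)
  then have s3: "(\<lambda>n. u ^ n / of_nat (Suc n)) sums (- L / u)"
    using assms(2) by (simp add: field_simps)
  have s4: "(\<lambda>n. u ^ n / of_nat n - u ^ n / of_nat (Suc n)) sums (- L - (- L / u))"
    by (rule sums_diff[OF s2 s3])
  have s5: "(\<lambda>n. (u ^ n / of_nat n - u ^ n / of_nat (Suc n)) + (if n = 0 then 1 else 0)) sums (- L - (- L / u) + 1)"
    by (rule sums_add[OF s4]) (rule sums_single[of 0 "\<lambda>_. 1::complex", simplified])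
  have "(\<lambda>n. fps_nth Af n * u ^ n) = (\<lambda>n. (u ^ n / of_nat n - u ^ n / of_nat (Suc n)) + (if n = 0 then 1 else 0))"
  proof
    fix n
    show "fps_nth Af n * u ^ n = (u ^ n / of_nat n - u ^ n / of_nat (Suc n)) + (if n = 0 then 1 else 0)"
    proof (cases "n = 0")
      case False
      have nz: "(of_nat n :: complex) \<noteq> 0" "(of_nat (Suc n) :: complex) \<noteq> 0"
        using False by (simp, metis Suc_neq_Zero of_nat_eq_0_iff)
      have "fps_nth Af n * u ^ n = u ^ n / (of_nat n * of_nat (Suc n))" using False by (simp add: Af_def)
      also have "\<dots> = u ^ n / of_nat n - u ^ n / of_nat (Suc n)" using nz
        by (simp add: field_simps del: of_nat_Suc) (simp add: algebra_simps)
      finally show ?thesis using False by simp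
    qed (simp add: Af_def)
  qed
  with s5 have "(\<lambda>n. fps_nth Af n * u ^ n) sums (- L - (- L / u) + 1)" by simp
  then have "eval_fps Af u = - L - (- L / u) + 1" unfolding eval_fps_def by (rule sums_unique[symmetric])
  then show ?thesis unfolding L_def using assms(2) by (simp add: field_simps)
qed


definition Phi :: "complex \<Rightarrow> complex" where
  "Phi z = exp (z * Ln z + (1 - z) * Ln (z - 1))"

lemma Ln_upper: assumes "0 \<le> Im z" "z \<noteq> 0"
  shows "Ln z = of_real (ln (norm z)) + \<i> * of_real (Arg2pi z)"
proof -
  have "Arg z = Arg2pi z"
  proof -
    have "Arg2pi z \<le> pi" using assms(1) by (simp add: Arg2pi_le_pi)
    have "0 \<le> Arg z" using assms(1) by (simp add: Arg_less_0)
    have "is_Arg z (Arg z)" by (rule is_Arg_Arg[OF assms(2)])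
    have "is_Arg z (Arg2pi z)" using Arg2pi by blast
    have "0 \<le> Arg2pi z" using Arg2pi by blast
    have "\<bar>Arg z - Arg2pi z\<bar> < 2 * pi"
      using \<open>0 \<le> Arg z\<close> \<open>0 \<le> Arg2pi z\<close> \<open>Arg2pi z \<le> pi\<close> Arg_le_pi[of z] pi_gt_zero
      by (simp only: abs_less_iff) linarith
    then show ?thesis
      using is_Arg_eqI[OF \<open>is_Arg z (Arg z)\<close> \<open>is_Arg z (Arg2pi z)\<close> _ assms(2)] by blast
  qed
  then show ?thesis using Ln_Arg[OF assms(2)] by simp
qed

lemma cont_Ln_upper: "continuous_on ({z. 0 \<le> Im z} - {0}) Ln"
proof -
  have "continuous_on ({z. 0 \<le> Im z} - {0}) (\<lambda>z. of_real (ln (norm z)) + \<i> * of_real (Arg2pi z))"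
    by (intro continuous_intros continuous_on_compose2[OF continuous_on_upperhalf_Arg2pi]) auto
  then show ?thesis by (rule continuous_on_eq) (auto simp: Ln_upper)
qed

lemma zLnz_bound: assumes "norm z < 1" shows "norm (z * Ln z) \<le> 2 * sqrt (norm z) + pi * norm z"
proof (cases "z = 0")
  case True then show ?thesis by simp
next
  case False
  define r where "r = norm z"
  have r: "0 < r" "r < 1" using False assms by (auto simp: r_def)
  have "norm (Ln z) \<le> \<bar>Re (Ln z)\<bar> + \<bar>Im (Ln z)\<bar>" by (rule cmod_le)
  also have "\<bar>Im (Ln z)\<bar> \<le> pi" using mpi_less_Im_Ln[OF False] Im_Ln_le_pi[OF False] by auto
  also have "\<bar>Re (Ln z)\<bar> = - ln r" using False r by (simp add: r_def)
  finally have L: "norm (Ln z) \<le> - ln r + pi" by simp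
  have "ln (1 / sqrt r) \<le> 1 / sqrt r - 1" using r by (intro ln_le_minus_one) simp
  moreover have "ln (1 / sqrt r) = - ln r / 2" using r by (simp add: ln_div ln_sqrt)
  ultimately have "- ln r \<le> 2 / sqrt r" by (simp add: field_simps)
  then have "r * (- ln r) \<le> r * (2 / sqrt r)" using r by (intro mult_left_mono) auto
  also have "r * (2 / sqrt r) = 2 * sqrt r" using r by (simp add: field_simps real_sqrt_mult[symmetric])
  finally have A: "r * (- ln r) \<le> 2 * sqrt r" .
  have "norm (z * Ln z) = r * norm (Ln z)" by (simp add: norm_mult r_def)
  also have "\<dots> \<le> r * (- ln r + pi)" using L r by (intro mult_left_mono) auto
  also have "\<dots> = r * (- ln r) + pi * r" by (simp add: algebra_simps)
  finally show ?thesis using A by (simp add: r_def)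
qed

lemma isCont_zLnz_0: "isCont (\<lambda>z. z * Ln z) 0"
proof -
  have "((\<lambda>z. z * Ln z) \<longlongrightarrow> 0) (at 0)"
  proof (rule Lim_null_comparison)
    show "\<forall>\<^sub>F z in at 0. norm (z * Ln z) \<le> 2 * sqrt (norm z) + pi * norm z"
      unfolding eventually_at by (intro exI[of _ 1]) (auto simp: dist_norm intro!: zLnz_bound)
    have "((\<lambda>z::complex. 2 * sqrt (norm z) + pi * norm z) \<longlongrightarrow> 2 * sqrt (norm (0::complex)) + pi * norm (0::complex)) (at 0)"
      by (intro tendsto_intros)
    then show "((\<lambda>z::complex. 2 * sqrt (norm z) + pi * norm z) \<longlongrightarrow> 0) (at 0)" by simp
  qed
  then show ?thesis by (simp add: isCont_def)
qed

lemma cont_zLnz: "continuous_on {z. 0 \<le> Im z} (\<lambda>z. z * Ln z)"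
  unfolding continuous_on_eq_continuous_within
proof
  fix x assume x: "x \<in> {z. 0 \<le> Im z}"
  show "continuous (at x within {z. 0 \<le> Im z}) (\<lambda>z. z * Ln z)"
  proof (cases "x = 0")
    case True then show ?thesis using isCont_zLnz_0 continuous_at_imp_continuous_within by blast
  next
    case False
    have "continuous (at x within ({z. 0 \<le> Im z} - {0})) Ln"
      using cont_Ln_upper x False by (simp add: continuous_on_eq_continuous_within)
    moreover have "at x within ({z. 0 \<le> Im z} - {0}) = at x within {z. 0 \<le> Im z}"
      by (rule at_within_nhd[of x "-{0}"]) (use False in auto)
    ultimately have "continuous (at x within {z. 0 \<le> Im z}) Ln" by simp
    then show ?thesis by (rule continuous_mult[OF continuous_ident])
  qed
qed

lemma cont_Phi: "continuous_on {z. 0 \<le> Im z} Phi"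
proof -
  have c1: "continuous_on {z. 0 \<le> Im z} (\<lambda>z. (z - 1) * Ln (z - 1))"
    by (rule continuous_on_compose2[OF cont_zLnz, of _ "\<lambda>z. z - 1"]) (auto intro: continuous_intros)
  have c2: "continuous_on {z. 0 \<le> Im z} (\<lambda>z. exp (z * Ln z - (z - 1) * Ln (z - 1)))"
    by (intro continuous_intros cont_zLnz c1)
  have eq: "(\<lambda>z. exp (z * Ln z - (z - 1) * Ln (z - 1))) = Phi"
    by (auto simp: Phi_def algebra_simps)
  from c2 show ?thesis by (simp only: eq)
qed

lemma hol_Phi: "Phi holomorphic_on {z. 0 < Im z}"
proof -
  have "(\<lambda>z. exp (z * Ln z + (1 - z) * Ln (z - 1))) holomorphic_on {z. 0 < Im z}"
    by (intro holomorphic_intros) (auto simp: complex_nonpos_Reals_iff)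
  then show ?thesis by (simp add: Phi_def[abs_def])
qed

lemma diff_Phi: "0 < Im z \<Longrightarrow> Phi field_differentiable at z"
  using hol_Phi by (rule holomorphic_on_imp_differentiable_at) (auto simp: open_halfspace_Im_gt)

lemma Im_Phi_real: "Im (Phi (of_real s)) = pi * gfun s"
proof -
  consider "s < 0" | "s = 0" | "0 < s \<and> s < 1" | "s = 1" | "s > 1" by linarith
  then show ?thesis
  proof cases
    case 1
    have "Ln (of_real s) = of_real (ln (- s)) + \<i> * pi" using 1 by (simp add: Ln_of_real')
    moreover have "Ln (of_real s - 1) = of_real (ln (1 - s)) + \<i> * pi"
      using Ln_of_real'[of "s - 1"] 1 by simp
    ultimately have "Im (of_real s * Ln (of_real s) + (1 - of_real s) * Ln (of_real s - 1)) = pi"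
      by (simp add: algebra_simps)
    then show ?thesis using 1 by (simp add: Phi_def Im_exp gfun_def)
  next
    case 2 then show ?thesis by (simp add: Phi_def gfun_def)
  next
    case 3
    have "Ln (of_real s) = of_real (ln s)" using 3 by (simp add: Ln_of_real)
    moreover have "Ln (of_real s - 1) = of_real (ln (1 - s)) + \<i> * pi"
      using Ln_of_real'[of "s - 1"] 3 by simp
    ultimately have E: "of_real s * Ln (of_real s) + (1 - of_real s) * Ln (of_real s - 1)
       = of_real (s * ln s + (1 - s) * ln (1 - s)) + \<i> * of_real ((1 - s) * pi)"
      by (simp add: algebra_simps)
    have "exp (s * ln s + (1 - s) * ln (1 - s)) = s powr s * (1 - s) powr (1 - s)"
      using 3 by (simp add: powr_def exp_add)
    moreover have "sin ((1 - s) * pi) = sin (pi * s)"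
      by (metis mult.commute sin_pi_minus right_diff_distrib' mult_1)
    ultimately show ?thesis using 3 by (simp add: Phi_def E Im_exp gfun_def)
  next
    case 4 then show ?thesis by (simp add: Phi_def gfun_def)
  next
    case 5
    have "Ln (of_real s) = of_real (ln s)" using 5 by (simp add: Ln_of_real)
    moreover have "Ln (of_real s - 1) = of_real (ln (s - 1))"
      using Ln_of_real[of "s - 1"] 5 by simp
    ultimately show ?thesis using 5 by (simp add: Phi_def Im_exp gfun_def)
  qed
qed


lemma cauchy_half:
  fixes f :: "complex \<Rightarrow> complex"
  assumes cf: "continuous_on {z. 0 \<le> Im z} f"
      and df: "\<And>z. 0 < Im z \<Longrightarrow> f field_differentiable at z"
      and R: "0 < R"
  shows "(f has_contour_integral (- integral {-R..R} (\<lambda>x. f (of_real x)))) (part_circlepath 0 R 0 pi)"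
proof -
  define S where "S = {z::complex. 0 \<le> Im z}"
  define g1 where "g1 = linepath (- of_real R) (of_real R :: complex)"
  define g2 where "g2 = part_circlepath 0 R 0 pi"
  have convS: "convex S" unfolding S_def by (rule convex_halfspace_Im_ge)
  have intS: "interior S = {z. 0 < Im z}"
  proof -
    have "interior {z. \<i> \<bullet> z \<ge> (0::real)} = {z::complex. \<i> \<bullet> z > 0}"
      by (rule interior_halfspace_ge) simp
    then show ?thesis unfolding S_def by simp
  qed
  have p1: "path_image g1 \<subseteq> S"
    unfolding g1_def path_image_linepath by (rule closed_segment_subset[OF _ _ convS]) (auto simp: S_def)
  have p2: "path_image g2 \<subseteq> S"
  proof
    fix w assume "w \<in> path_image g2"
    then obtain t where t: "t \<in> closed_segment 0 pi" "w = 0 + of_real R * cis t"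
      unfolding g2_def path_image_part_circlepath' by auto
    then have "0 \<le> t" "t \<le> pi" by (auto simp: closed_segment_eq_real_ivl)
    then have "0 \<le> sin t" by (rule sin_ge_zero)
    then show "w \<in> S" using t R by (simp add: S_def)
  qed
  have v1: "valid_path g1" and v2: "valid_path g2" by (simp_all add: g1_def g2_def)
  have e12: "pathfinish g1 = pathstart g2" by (simp add: g1_def g2_def)
  have e21: "pathfinish g2 = pathstart g1" by (simp add: g1_def g2_def exp_of_real)
  have "continuous_on (path_image g1) f" using cf p1 unfolding S_def by (rule continuous_on_subset)
  then have i1: "f contour_integrable_on g1" unfolding g1_def path_image_linepath
    by (rule contour_integrable_continuous_linepath)
  have "continuous_on (path_image g2) f" using cf p2 unfolding S_def by (rule continuous_on_subset)
  then have i2: "f contour_integrable_on g2" unfolding g2_def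
    by (rule contour_integrable_continuous_part_circlepath)
  obtain I1 where I1: "(f has_contour_integral I1) g1" using i1 unfolding contour_integrable_on_def by blast
  obtain I2 where I2: "(f has_contour_integral I2) g2" using i2 unfolding contour_integrable_on_def by blast
  have "(f has_contour_integral (I1 + I2)) (g1 +++ g2)"
    by (rule has_contour_integral_join[OF I1 I2 v1 v2])
  moreover have "(f has_contour_integral 0) (g1 +++ g2)"
  proof (rule Cauchy_theorem_convex[where K = "{}"])
    show "continuous_on S f" using cf by (simp add: S_def)
    show "convex S" by (rule convS)
    show "finite {}" by simp
    show "\<And>x. x \<in> interior S - {} \<Longrightarrow> f field_differentiable at x" using df intS by auto
    show "valid_path (g1 +++ g2)" by (rule valid_path_join[OF v1 v2 e12])
    show "path_image (g1 +++ g2) \<subseteq> S" using path_image_join[OF e12] p1 p2 by auto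
    show "pathfinish (g1 +++ g2) = pathstart (g1 +++ g2)" using e21 by simp
  qed
  ultimately have "I1 + I2 = 0" by (rule has_contour_integral_unique)
  moreover have "I1 = integral {-R..R} (\<lambda>x. f (of_real x))"
  proof -
    have "((\<lambda>x. f (of_real x)) has_integral I1) {Re (- of_real R)..Re (of_real R)}"
      using I1 unfolding g1_def using R
      by (subst (asm) has_contour_integral_linepath_Reals_iff) auto
    then show ?thesis by (simp add: integral_unique)
  qed
  ultimately have "I2 = - integral {-R..R} (\<lambda>x. f (of_real x))" by (simp add: eq_neg_iff_add_eq_0 add.commute)
  then show ?thesis using I2 by (simp add: g2_def)
qed

lemma Phi_expand:
  assumes "0 \<le> Im z" "2 \<le> norm z"
  shows "Phi z = of_real (exp 1) * z * eval_fps Pf (1 / z)"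
proof -
  define u where "u = 1 / z"
  have z0: "z \<noteq> 0" using assms by auto
  have nu: "norm u \<le> 1/2" using assms by (simp add: u_def norm_divide divide_le_eq)
  then have nu1: "norm u < 1" by simp
  have u0: "u \<noteq> 0" using z0 by (simp add: u_def)
  have zu: "z - 1 = z * (1 - u)" using z0 by (simp add: u_def field_simps)
  have nz1: "1 - u \<noteq> 0" using nu1 by auto
  have z1: "z - 1 \<noteq> 0" using assms by auto
  define s where "s = Ln z + Ln (1 - u)"
  have a1: "0 \<le> Im (Ln z)" using assms(1) z0 Arg_eq_Im_Ln[OF z0] Arg_less_0[of z] by simp
  have a2: "Im (Ln z) \<le> pi" by (rule Im_Ln_le_pi[OF z0])
  have re1: "0 < Re (1 - u)"
  proof -
    have "Re u \<le> norm u" by (rule complex_Re_le_cmod)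
    then show ?thesis using nu by simp
  qed
  have b1: "\<bar>Im (Ln (1 - u))\<bar> < pi / 2" by (rule Re_Ln_pos_lt_imp[OF re1])
  have imu: "Im u \<le> 0" using assms(1) by (simp add: u_def Im_divide)
  have b2: "0 \<le> Im (Ln (1 - u))" using imu Arg_eq_Im_Ln[OF nz1] Arg_less_0[of "1 - u"] by simp
  have c1: "0 \<le> Im (Ln (z - 1))" using assms(1) Arg_eq_Im_Ln[OF z1] Arg_less_0[of "z - 1"] by simp
  have sle: "Im s \<le> pi"
  proof (rule ccontr)
    assume "\<not> Im s \<le> pi"
    then have gt: "pi < Im s" by simp
    have ng: "\<not> Im s \<le> - pi" using gt pi_gt_zero by linarith
    have "Ln (z - 1) = s - \<i> * of_real (2 * pi)"
      using Ln_times[OF z0 nz1] gt ng unfolding zu s_def by (simp add: if_split)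
    then have "Im (Ln (z - 1)) = Im s - 2 * pi" by simp
    moreover have "Im s < 3 * pi / 2" using a2 b1 by (simp add: s_def)
    ultimately show False using c1 pi_gt_zero by simp
  qed
  have ims: "Im s = Im (Ln z) + Im (Ln (1 - u))" by (simp add: s_def)
  have sge: "- pi < Im s" using ims a1 b2 pi_gt_zero by linarith
  have L: "Ln (z - 1) = Ln z + Ln (1 - u)"
    using Ln_times[OF z0 nz1] sle sge unfolding zu s_def by auto
  have "z * Ln z + (1 - z) * Ln (z - 1) = Ln z + (1 - 1/u) * Ln (1 - u)"
    unfolding L by (simp add: u_def algebra_simps)
  also have "(1 - 1/u) * Ln (1 - u) = 1 - eval_fps Af u" using Af_Ln[OF nu1 u0] by simp
  finally have E: "z * Ln z + (1 - z) * Ln (z - 1) = Ln z + 1 + (- eval_fps Af u)" by simp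
  have "Phi z = exp (Ln z) * exp 1 * exp (- eval_fps Af u)"
    by (simp only: Phi_def E exp_add)
  also have "exp (- eval_fps Af u) = eval_fps Pf u" by (rule Pf_exp[OF nu1, symmetric])
  also have "exp (Ln z) = z" using z0 by simp
  also have "(exp 1 :: complex) = of_real (exp 1)" by (simp add: exp_of_real[symmetric])
  finally show ?thesis by (simp add: u_def)
qed

lemma tail_bound:
  fixes u :: complex
  assumes "norm u \<le> 1/2"
  shows "norm (eval_fps Pf u - (\<Sum>n<N. of_real (ecoef n) * u ^ n)) \<le> 2 * norm u ^ N"
proof -
  have nu1: "norm u < 1" using assms by simp
  have "(\<lambda>n. fps_nth Pf n * u ^ n) sums eval_fps Pf u"
    by (rule sums_eval_fps[OF in_radius[OF nu1 Pf_radius]])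
  then have s: "(\<lambda>n. of_real (ecoef n) * u ^ n) sums eval_fps Pf u" by (simp add: Pf_def)
  define T where "T = (\<lambda>i. of_real (ecoef (i + N)) * u ^ (i + N))"
  have sT: "T sums (eval_fps Pf u - (\<Sum>n<N. of_real (ecoef n) * u ^ n))"
    unfolding T_def by (rule sums_split_initial_segment[OF s])
  have nT: "norm (T i) \<le> norm u ^ N * norm u ^ i" for i
  proof -
    have "norm (T i) = \<bar>ecoef (i + N)\<bar> * norm u ^ (i + N)" by (simp add: T_def norm_mult norm_power)
    also have "\<dots> \<le> 1 * norm u ^ (i + N)" by (rule mult_right_mono[OF ecoef_bound]) simp
    finally show ?thesis by (simp add: power_add mult.commute)
  qed
  have g: "(\<lambda>i. norm u ^ N * norm u ^ i) sums (norm u ^ N * (1 / (1 - norm u)))"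
    by (rule sums_mult[OF geometric_sums]) (simp add: nu1)
  have sn: "summable (\<lambda>i. norm (T i))"
    by (rule summable_comparison_test'[OF sums_summable[OF g]]) (use nT in simp)
  have "norm (suminf T) \<le> (\<Sum>i. norm (T i))" by (rule summable_norm[OF sn])
  also have "\<dots> \<le> (\<Sum>i. norm u ^ N * norm u ^ i)"
    by (rule suminf_le[OF nT sn sums_summable[OF g]])
  also have "\<dots> = norm u ^ N * (1 / (1 - norm u))" by (rule sums_unique[OF g, symmetric])
  also have "\<dots> \<le> norm u ^ N * 2"
  proof (rule mult_left_mono)
    show "1 / (1 - norm u) \<le> 2" using assms by (simp add: divide_le_eq)
  qed simp
  finally show ?thesis using sums_unique[OF sT] by (simp add: mult.commute)
qed


lemma Im_has_integral:
  fixes g :: "real \<Rightarrow> complex"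
  assumes "(g has_integral I) S"
  shows "((\<lambda>x. Im (g x)) has_integral Im I) S"
  using has_integral_linear[OF assms bounded_linear_Im] by (simp add: o_def)

lemma real_line_Im:
  fixes f :: "complex \<Rightarrow> complex"
  assumes R: "1 \<le> R" and cont: "continuous_on {z. 0 \<le> Im z} f"
    and im: "\<And>x. Im (f (of_real x)) = pi * (gfun x * x ^ k)"
  shows "Im (integral {-R..R} (\<lambda>x. f (of_real x))) = pi * integral {0..1} (\<lambda>t. gfun t * t ^ k)"
    and "(\<lambda>t. gfun t * t ^ k) integrable_on {0..1}"
proof -
  define h where "h = (\<lambda>t. gfun t * t ^ k)"
  have c: "continuous_on {-R..R} (\<lambda>x. f (of_real x))"
    by (rule continuous_on_compose2[OF cont]) (auto intro: continuous_intros)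
  then have "(\<lambda>x. f (of_real x)) integrable_on {-R..R}" by (rule integrable_continuous_interval)
  then have hi: "((\<lambda>x. f (of_real x)) has_integral integral {-R..R} (\<lambda>x. f (of_real x))) {-R..R}"
    by (rule integrable_integral)
  have "((\<lambda>x. Im (f (of_real x))) has_integral Im (integral {-R..R} (\<lambda>x. f (of_real x)))) {-R..R}"
    by (rule Im_has_integral[OF hi])
  then have A: "((\<lambda>x. pi * h x) has_integral Im (integral {-R..R} (\<lambda>x. f (of_real x)))) {-R..R}"
    by (simp add: im h_def)
  have "(\<lambda>x. pi * h x) integrable_on {0..1}"
    by (rule integrable_subinterval_real[OF has_integral_integrable[OF A]]) (use R in auto)
  then have hint: "h integrable_on {0..1}" by simp
  then show "(\<lambda>t. gfun t * t ^ k) integrable_on {0..1}" by (simp add: h_def)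
  have "((\<lambda>x. pi * h x) has_integral (pi * integral {0..1} h)) {0..1}"
    by (rule has_integral_mult_right[OF integrable_integral[OF hint]])
  then have "((\<lambda>x. pi * h x) has_integral (pi * integral {0..1} h)) {-R..R}"
  proof (rule has_integral_on_superset)
    fix x :: real assume "x \<notin> {0..1}"
    then show "pi * h x = 0" by (auto simp: h_def gfun_def)
  qed (use R in auto)
  with A show "Im (integral {-R..R} (\<lambda>x. f (of_real x))) = pi * integral {0..1} (\<lambda>t. gfun t * t ^ k)"
    unfolding h_def using has_integral_unique by blast
qed

lemma poly_split:
  fixes z :: complex and a :: "nat \<Rightarrow> complex"
  assumes z: "z \<noteq> 0"
  shows "z ^ (k + 1) * (\<Sum>n<k+3. a n * (1 / z) ^ n) = (\<Sum>n\<le>k+1. a n * z ^ (k + 1 - n)) + a (k + 2) / z"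
proof -
  define F where "F = (\<lambda>n. a n * (1 / z) ^ n)"
  have I: "{..<k+3} = insert (k+2) {..k+1}" by auto
  have "(\<Sum>n<k+3. F n) = F (k+2) + (\<Sum>n\<le>k+1. F n)"
    unfolding I by (rule sum.insert) auto
  then have s: "(\<Sum>n<k+3. a n * (1 / z) ^ n) = (\<Sum>n\<le>k+1. a n * (1 / z) ^ n) + a (k+2) * (1 / z) ^ (k+2)"
    unfolding F_def by (simp only: add.commute)
  have t: "z ^ (k + 1) * (a n * (1 / z) ^ n) = a n * z ^ (k + 1 - n)" if "n \<le> k + 1" for n
  proof -
    have "z ^ (k + 1) = z ^ (k + 1 - n) * z ^ n" using that by (simp flip: power_add)
    moreover have "z ^ n * (1 / z) ^ n = 1" using z by (simp flip: power_mult_distrib)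
    ultimately show ?thesis by (simp add: algebra_simps)
  qed
  have l: "z ^ (k + 1) * (a (k+2) * (1 / z) ^ (k+2)) = a (k + 2) / z"
  proof -
    have "z ^ (k + 1) * (1 / z) ^ (k + 1) = 1" using z by (simp flip: power_mult_distrib)
    moreover have "(1 / z) ^ (k+2) = (1 / z) ^ (k+1) * (1 / z)" by simp
    ultimately show ?thesis by (simp add: field_simps)
  qed
  have m: "z ^ (k + 1) * (\<Sum>n\<le>k+1. a n * (1 / z) ^ n) = (\<Sum>n\<le>k+1. a n * z ^ (k + 1 - n))"
    unfolding sum_distrib_left by (rule sum.cong[OF refl], rule t, simp)
  show ?thesis by (simp only: s distrib_left l m)
qed

lemma bound_from_all:
  fixes D C :: real
  assumes "\<And>R. 2 \<le> R \<Longrightarrow> \<bar>D\<bar> \<le> C / R" and "0 \<le> C"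
  shows "D = 0"
proof (rule ccontr)
  assume D: "D \<noteq> 0"
  define R where "R = max 2 (2 * C / \<bar>D\<bar> + 1)"
  have R2: "2 \<le> R" by (simp add: R_def)
  have "2 * C / \<bar>D\<bar> < R" by (simp add: R_def)
  then have "2 * C < R * \<bar>D\<bar>" using D by (simp add: divide_less_eq)
  moreover have "\<bar>D\<bar> * R \<le> C" using assms(1)[OF R2] R2 by (simp add: le_divide_eq)
  ultimately show False using D assms(2) by (smt (verit) mult.commute zero_less_abs_iff mult_pos_pos R2)
qed


lemma arc_points:
  assumes "w \<in> path_image (part_circlepath 0 R 0 pi)" "0 < R"
  shows "norm w = R" "0 \<le> Im w"
proof -
  obtain t where t: "t \<in> closed_segment 0 pi" "w = 0 + of_real R * cis t"
    using assms(1) unfolding path_image_part_circlepath' by auto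
  then have "0 \<le> t" "t \<le> pi" by (auto simp: closed_segment_eq_real_ivl)
  then have "0 \<le> sin t" by (rule sin_ge_zero)
  then show "0 \<le> Im w" using t assms(2) by simp
  show "norm w = R" using t assms(2) by (simp add: norm_mult)
qed

theorem moments: "((\<lambda>t. gfun t * t ^ k) has_integral (exp 1 * bcoef (k + 2))) {0..1}"
proof -
  define E1 :: complex where "E1 = of_real (exp 1)"
  define f where "f = (\<lambda>z. z ^ k * Phi z)"
  define p where "p = (\<lambda>z. E1 * (\<Sum>n\<le>k+1. of_real (ecoef n) * z ^ (k + 1 - n)))"
  define c where "c = E1 * of_real (ecoef (k + 2))"
  define M where "M = integral {0..1} (\<lambda>t. gfun t * t ^ k)"
  have cf: "continuous_on {z. 0 \<le> Im z} f" unfolding f_def by (intro continuous_intros cont_Phi)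
  have hf: "f holomorphic_on {z. 0 < Im z}" unfolding f_def by (intro holomorphic_intros hol_Phi)
  have df: "f field_differentiable at z" if "0 < Im z" for z
    by (rule holomorphic_on_imp_differentiable_at[OF hf]) (auto simp: open_halfspace_Im_gt that)
  have hp: "p holomorphic_on UNIV" unfolding p_def by (intro holomorphic_intros)
  have cp: "continuous_on {z. 0 \<le> Im z} p"
    using holomorphic_on_imp_continuous_on[OF hp] by (rule continuous_on_subset) auto
  have dp: "p field_differentiable at z" for z
    using hp by (rule holomorphic_on_imp_differentiable_at) auto
  have imf: "Im (f (of_real x)) = pi * (gfun x * x ^ k)" for x
  proof -
    have "f (of_real x) = of_real (x ^ k) * Phi (of_real x)" by (simp add: f_def)
    then show ?thesis by (simp add: Im_Phi_real)
  qed
  have imp: "Im (p (of_real x)) = 0" for x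
  proof -
    have "p (of_real x) = of_real (exp 1 * (\<Sum>n\<le>k+1. ecoef n * x ^ (k + 1 - n)))"
      by (simp add: p_def E1_def)
    then show ?thesis by simp
  qed
  have Mint: "(\<lambda>t. gfun t * t ^ k) integrable_on {0..1}"
    using real_line_Im(2)[of 1 f k] cf imf by simp
  have key: "\<bar>M + exp 1 * ecoef (k + 2)\<bar> \<le> (2 * exp 1) / R" if R: "2 \<le> R" for R
  proof -
    have R0: "0 < R" using R by simp
    define If where "If = integral {-R..R} (\<lambda>x. f (of_real x))"
    define Ip where "Ip = integral {-R..R} (\<lambda>x. p (of_real x))"
    have imIf: "Im If = pi * M" unfolding If_def M_def by (rule real_line_Im(1)[OF _ cf imf]) (use R in simp)
    have imIp: "Im Ip = 0"
    proof -
      have "continuous_on {-R..R} (\<lambda>x. p (of_real x))"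
        by (rule continuous_on_compose2[OF cp]) (auto intro: continuous_intros)
      then have "((\<lambda>x. p (of_real x)) has_integral Ip) {-R..R}"
        unfolding Ip_def by (intro integrable_integral integrable_continuous_interval)
      then have "((\<lambda>x. Im (p (of_real x))) has_integral Im Ip) {-R..R}" by (rule Im_has_integral)
      then show ?thesis by (simp add: imp)
    qed
    define arc where "arc = part_circlepath 0 R 0 pi"
    have af: "(f has_contour_integral (- If)) arc"
      unfolding If_def arc_def by (rule cauchy_half[OF cf df R0])
    have ap: "(p has_contour_integral (- Ip)) arc"
      unfolding Ip_def arc_def by (rule cauchy_half[OF cp dp R0])
    have ac: "((\<lambda>z. c / z) has_contour_integral (of_real pi * c * \<i>)) arc"
    proof -
      have "((\<lambda>t. c * \<i>) has_integral (of_real pi * c * \<i>)) {0..pi}"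
        using has_integral_const_real[of "c * \<i>" 0 pi] by (simp add: scaleR_conv_of_real mult.assoc)
      moreover have eq: "(c / (0 + of_real R * cis t)) * of_real R * \<i> * cis t = c * \<i>" for t
        using R0 by (simp add: field_simps cis_neq_zero)
      ultimately have "((\<lambda>t. (c / (0 + of_real R * cis t)) * of_real R * \<i> * cis t) has_integral (of_real pi * c * \<i>)) {0..pi}"
        by (simp only: eq)
      then show ?thesis unfolding arc_def
        by (subst has_contour_integral_part_circlepath_iff) (simp_all add: pi_gt_zero)
    qed
    define rho where "rho = (\<lambda>z. f z - p z - c / z)"
    have ar: "(rho has_contour_integral (- If - (- Ip) - of_real pi * c * \<i>)) arc"
      unfolding rho_def by (intro has_contour_integral_diff af ap ac)
    have bd: "norm (rho z) \<le> 2 * exp 1 / R ^ 2" if z: "z \<in> path_image arc" for z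
    proof -
      have nz: "norm z = R" and iz: "0 \<le> Im z" using arc_points[OF z[unfolded arc_def] R0] by auto
      have z0: "z \<noteq> 0" using nz R0 by auto
      have nu: "norm (1 / z) \<le> 1/2" using nz R by (simp add: norm_divide divide_le_eq)
      have "rho z = E1 * z ^ (k + 1) * (eval_fps Pf (1 / z) - (\<Sum>n<k+3. of_real (ecoef n) * (1 / z) ^ n))"
      proof -
        have "f z = E1 * z ^ (k + 1) * eval_fps Pf (1 / z)"
          unfolding f_def using Phi_expand[OF iz] nz R by (simp add: E1_def algebra_simps)
        moreover have "z ^ (k + 1) * (\<Sum>n<k+3. of_real (ecoef n) * (1 / z) ^ n) =
             (\<Sum>n\<le>k+1. of_real (ecoef n) * z ^ (k + 1 - n)) + of_real (ecoef (k + 2)) / z"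
          by (rule poly_split[OF z0])
        ultimately show ?thesis unfolding rho_def p_def c_def by (simp add: algebra_simps)
      qed
      also have "norm \<dots> = exp 1 * R ^ (k + 1) * norm (eval_fps Pf (1 / z) - (\<Sum>n<k+3. of_real (ecoef n) * (1 / z) ^ n))"
        by (simp add: norm_mult norm_power nz E1_def)
      also have "\<dots> \<le> exp 1 * R ^ (k + 1) * (2 * norm (1 / z) ^ (k + 3))"
        by (rule mult_left_mono[OF tail_bound[OF nu]]) (use R0 in simp)
      also have "\<dots> = 2 * exp 1 / R ^ 2"
        using R0 by (simp add: norm_divide nz field_simps power_add power2_eq_square power3_eq_cube)
      finally show ?thesis .
    qed
    have "norm (- If - (- Ip) - of_real pi * c * \<i>) \<le> (2 * exp 1 / R ^ 2) * R * (pi - 0)"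
      by (rule has_contour_integral_bound_part_circlepath[OF ar[unfolded arc_def]]) (use R0 bd[unfolded arc_def] in auto)
    also have "\<dots> = pi * (2 * exp 1 / R)" using R0 by (simp add: power2_eq_square field_simps)
    finally have n1: "norm (- If - (- Ip) - of_real pi * c * \<i>) \<le> pi * (2 * exp 1 / R)" .
    have "Im (- If - (- Ip) - of_real pi * c * \<i>) = - (pi * (M + exp 1 * ecoef (k + 2)))"
      using imIf imIp by (simp add: c_def E1_def algebra_simps)
    then have "pi * \<bar>M + exp 1 * ecoef (k + 2)\<bar> \<le> pi * (2 * exp 1 / R)"
      using abs_Im_le_cmod[of "- If - (- Ip) - of_real pi * c * \<i>"] n1 by (simp add: abs_mult)
    then show ?thesis by (rule mult_left_le_imp_le) (rule pi_gt_zero)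
  qed
  have "M + exp 1 * ecoef (k + 2) = 0" by (rule bound_from_all[OF key]) simp_all
  then have "M = exp 1 * bcoef (k + 2)" by (simp add: ecoef_def)
  then show ?thesis using integrable_integral[OF Mint] by (simp add: M_def)
qed


lemma gfun_nonneg: "0 \<le> gfun t"
proof (cases "0 < t \<and> t < 1")
  case True
  then have "0 \<le> sin (pi * t)" by (intro sin_ge_zero) auto
  then show ?thesis using True by (simp add: gfun_def)
qed (auto simp: gfun_def)

lemma bcoef_nonneg: "0 \<le> bcoef n"
proof -
  consider "n = 0" | "n = 1" | k where "n = k + 2" by (metis add_2_eq_Suc' not0_implies_Suc One_nat_def)
  then show ?thesis
  proof cases
    case 3
    have "0 \<le> exp 1 * bcoef (k + 2)"
      by (rule has_integral_nonneg[OF moments]) (simp add: gfun_nonneg)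
    then show ?thesis using 3 by (simp add: zero_le_mult_iff del: bcoef.simps)
  qed simp_all
qed

definition Vf :: "real \<Rightarrow> real" where "Vf u = exp (- (1 - (1 - 1/u) * ln (1 - u)))"

lemma real_series: assumes "0 < u" "u < 1"
  shows "(\<lambda>n. ecoef n * u ^ n) sums Vf u"
proof -
  have nu: "norm (of_real u :: complex) < 1" using assms by simp
  have u0: "(of_real u :: complex) \<noteq> 0" using assms by simp
  have "(\<lambda>n. fps_nth Pf n * of_real u ^ n) sums eval_fps Pf (of_real u)"
    by (rule sums_eval_fps[OF in_radius[OF nu Pf_radius]])
  also have "eval_fps Pf (of_real u) = exp (- eval_fps Af (of_real u))" by (rule Pf_exp[OF nu])
  also have "eval_fps Af (of_real u) = 1 - (1 - 1 / of_real u) * Ln (1 - of_real u)" by (rule Af_Ln[OF nu u0])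
  also have "Ln (1 - of_real u) = of_real (ln (1 - u))" using assms Ln_of_real[of "1 - u"] by simp
  finally have "(\<lambda>n. of_real (ecoef n * u ^ n) :: complex) sums of_real (Vf u)"
    by (simp add: Pf_def Vf_def exp_of_real[symmetric])
  then show ?thesis by (simp only: sums_of_real_iff)
qed

lemma Vf_lim: "(Vf \<longlongrightarrow> exp (-1)) (at_left 1)"
  unfolding Vf_def by real_asymp

lemma bseries: assumes "0 < u" "u < 1"
  shows "(\<lambda>n. bcoef n * u ^ n) sums (1 - Vf u)"
proof -
  have "(\<lambda>n. - (ecoef n * u ^ n) + (if n = 0 then 1 else 0)) sums (- Vf u + 1)"
    by (intro sums_add sums_minus real_series[OF assms]) (rule sums_single[of 0 "\<lambda>_. 1::real", simplified])
  moreover have "(\<lambda>n. - (ecoef n * u ^ n) + (if n = 0 then 1 else 0)) = (\<lambda>n. bcoef n * u ^ n)"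
    by (auto simp: ecoef_def)
  ultimately show ?thesis by simp
qed

lemma bsum: "(\<lambda>n. bcoef n) sums (1 - exp (-1))"
proof -
  have ev: "\<forall>\<^sub>F u in at_left (1::real). 0 < u \<and> u < 1"
    by (rule eventually_at_leftI[of 0]) auto
  have part: "(\<Sum>i<N. bcoef i) \<le> 1 - exp (-1)" for N
  proof -
    have "((\<lambda>u. \<Sum>i<N. bcoef i * u ^ i) \<longlongrightarrow> (\<Sum>i<N. bcoef i * 1 ^ i)) (at_left 1)"
      by (intro tendsto_intros)
    then have L: "((\<lambda>u. \<Sum>i<N. bcoef i * u ^ i) \<longlongrightarrow> (\<Sum>i<N. bcoef i)) (at_left 1)" by simp
    have R: "((\<lambda>u. 1 - Vf u) \<longlongrightarrow> 1 - exp (-1)) (at_left (1::real))"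
      by (intro tendsto_intros Vf_lim)
    have "\<forall>\<^sub>F u in at_left (1::real). (\<Sum>i<N. bcoef i * u ^ i) \<le> 1 - Vf u"
      using ev
    proof (rule eventually_mono)
      fix u :: real assume u: "0 < u \<and> u < 1"
      have s: "(\<lambda>n. bcoef n * u ^ n) sums (1 - Vf u)" using bseries u by auto
      have "(\<Sum>i<N. bcoef i * u ^ i) \<le> suminf (\<lambda>n. bcoef n * u ^ n)"
        by (rule sum_le_suminf[OF sums_summable[OF s]]) (use u bcoef_nonneg in auto)
      then show "(\<Sum>i<N. bcoef i * u ^ i) \<le> 1 - Vf u" using sums_unique[OF s] by simp
    qed
    then show ?thesis by (rule tendsto_le[OF _ R L, rotated]) simp
  qed
  have sm: "summable bcoef" by (rule summableI_nonneg_bounded[OF bcoef_nonneg part])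
  have le: "suminf bcoef \<le> 1 - exp (-1)" by (rule suminf_le_const[OF sm part])
  have ge: "1 - exp (-1) \<le> suminf bcoef"
  proof -
    have R: "((\<lambda>u. 1 - Vf u) \<longlongrightarrow> 1 - exp (-1)) (at_left (1::real))"
      by (intro tendsto_intros Vf_lim)
    have "\<forall>\<^sub>F u in at_left (1::real). 1 - Vf u \<le> suminf bcoef"
      using ev
    proof (rule eventually_mono)
      fix u :: real assume u: "0 < u \<and> u < 1"
      have s: "(\<lambda>n. bcoef n * u ^ n) sums (1 - Vf u)" using bseries u by auto
      have "suminf (\<lambda>n. bcoef n * u ^ n) \<le> suminf bcoef"
      proof (rule suminf_le[OF _ sums_summable[OF s] sm])
        fix n
        have "u ^ n \<le> 1" using u by (simp add: power_le_one)
        then show "bcoef n * u ^ n \<le> bcoef n" using bcoef_nonneg[of n] by (simp add: mult_left_le)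
      qed
      then show "1 - Vf u \<le> suminf bcoef" using sums_unique[OF s] by simp
    qed
    then show ?thesis by (rule tendsto_le[OF _ tendsto_const R, rotated]) simp
  qed
  show ?thesis using le ge summable_sums[OF sm] by simp
qed

lemma gfun_sym: "gfun (1 - t) = gfun t"
proof -
  have s: "sin (pi * (1 - t)) = sin (pi * t)" by (simp add: right_diff_distrib sin_diff)
  have c: "(0 < 1 - t \<and> 1 - t < 1) = (0 < t \<and> t < 1)" by auto
  show ?thesis unfolding gfun_def c s by (simp add: mult_ac)
qed

lemma moments_refl: "((\<lambda>t. gfun t * (1 - t) ^ k) has_integral (exp 1 * bcoef (k + 2))) {0..1}"
proof -
  have m: "((\<lambda>t. gfun t * t ^ k) has_integral (exp 1 * bcoef (k + 2))) (cbox 0 1)"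
    using moments[of k] by (simp only: cbox_interval)
  have A: "((\<lambda>x. gfun ((-1) *\<^sub>R x + 1) * ((-1) *\<^sub>R x + 1) ^ k) has_integral
        (1 / \<bar>-1\<bar> ^ DIM(real)) *\<^sub>R (exp 1 * bcoef (k + 2)))
        ((\<lambda>x. (1 / (-1)) *\<^sub>R x + - ((1 / (-1)) *\<^sub>R 1)) ` cbox 0 1)"
    by (rule has_integral_affinity[OF m]) simp
  have im: "(\<lambda>x::real. (1 / (-1)) *\<^sub>R x + - ((1 / (-1)) *\<^sub>R 1)) ` cbox 0 1 = {0..1}"
  proof -
    have "(\<lambda>x::real. (1 / (-1)) *\<^sub>R x + - ((1 / (-1)) *\<^sub>R 1)) = (\<lambda>x. (-1) * x + 1)" by (rule ext) simp
    moreover have "(\<lambda>x::real. (-1) * x + 1) ` {0..1} = {0..1}" by (simp only: image_affinity_atLeastAtMost) simp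
    ultimately show ?thesis by (simp only: cbox_interval)
  qed
  have c1: "(1 / \<bar>-1\<bar> ^ DIM(real)) *\<^sub>R (exp 1 * bcoef (k + 2)) = exp 1 * bcoef (k + 2)" by simp
  have eqf: "gfun ((-1) *\<^sub>R x + 1) * ((-1) *\<^sub>R x + 1) ^ k = gfun x * (1 - x) ^ k" for x :: real
  proof -
    have "(-1) *\<^sub>R x + 1 = 1 - x" by simp
    then show ?thesis by (simp only: gfun_sym)
  qed
  show ?thesis using A unfolding im c1 eqf .
qed


declare bcoef.simps(3)[simp del]

lemma btail: "(\<lambda>i. bcoef (i + 2)) sums (1/2 - exp (-1))"
proof -
  have "(\<lambda>i. bcoef (i + 2)) sums ((1 - exp (-1)) - (\<Sum>i<2. bcoef i))"
    by (rule sums_split_initial_segment[OF bsum])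
  moreover have "(\<Sum>i<2. bcoef i) = 1/2" by (simp add: numeral_2_eq_2)
  ultimately show ?thesis by simp
qed

theorem J_integral: "((\<lambda>t. gfun t / t) has_integral (exp 1 / 2 - 1)) {0..1}"
proof -
  define F where "F = (\<lambda>N t. gfun t * (\<Sum>i<N. (1 - t) ^ i))"
  have FI: "(F N has_integral (exp 1 * (\<Sum>i<N. bcoef (i + 2)))) {0..1}" for N
  proof -
    have "((\<lambda>t. \<Sum>i<N. gfun t * (1 - t) ^ i) has_integral (\<Sum>i<N. exp 1 * bcoef (i + 2))) {0..1}"
      by (intro has_integral_sum finite_lessThan moments_refl)
    then show ?thesis by (simp add: F_def sum_distrib_left)
  qed
  have int: "F N integrable_on {0..1}" for N using FI by blast
  have mono: "F N t \<le> F (Suc N) t" if "t \<in> {0..1}" for N t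
  proof -
    have "0 \<le> gfun t * (1 - t) ^ N" using that gfun_nonneg[of t] by simp
    then show ?thesis by (simp add: F_def algebra_simps)
  qed
  have lim: "(\<lambda>N. F N t) \<longlonglongrightarrow> gfun t / t" if "t \<in> {0..1}" for t
  proof (cases "t = 0")
    case True then show ?thesis by (simp add: F_def gfun_def)
  next
    case False
    then have t: "0 < t" "t \<le> 1" using that by auto
    have "(\<lambda>i. (1 - t) ^ i) sums (1 / (1 - (1 - t)))"
      by (rule geometric_sums) (use t in simp)
    then have "(\<lambda>N. \<Sum>i<N. (1 - t) ^ i) \<longlonglongrightarrow> 1 / t" by (simp add: sums_def)
    then have "(\<lambda>N. gfun t * (\<Sum>i<N. (1 - t) ^ i)) \<longlonglongrightarrow> gfun t * (1 / t)"
      by (rule tendsto_mult_left)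
    then show ?thesis by (simp add: F_def)
  qed
  have bnd: "bounded (range (\<lambda>N. integral {0..1} (F N)))"
  proof -
    have "\<bar>integral {0..1} (F N)\<bar> \<le> exp 1" for N
    proof -
      have "integral {0..1} (F N) = exp 1 * (\<Sum>i<N. bcoef (i + 2))" using FI by (rule integral_unique)
      moreover have "0 \<le> (\<Sum>i<N. bcoef (i + 2))" by (rule sum_nonneg) (use bcoef_nonneg in auto)
      moreover have "(\<Sum>i<N. bcoef (i + 2)) \<le> 1"
      proof -
        have "(\<Sum>i<N. bcoef (i + 2)) \<le> suminf (\<lambda>i. bcoef (i + 2))"
          by (rule sum_le_suminf[OF sums_summable[OF btail]]) (use bcoef_nonneg in auto)
        also have "\<dots> = 1/2 - exp (-1)" by (rule sums_unique[OF btail, symmetric])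
        also have "\<dots> \<le> 1" using exp_gt_zero[of "-1"] by linarith
        finally show ?thesis .
      qed
      ultimately show ?thesis by (simp add: abs_mult)
    qed
    then show ?thesis unfolding bounded_iff by (intro exI[of _ "exp 1"]) auto
  qed
  have mct: "(\<lambda>t. gfun t / t) integrable_on {0..1} \<and>
      (\<lambda>N. integral {0..1} (F N)) \<longlonglongrightarrow> integral {0..1} (\<lambda>t. gfun t / t)"
    by (rule monotone_convergence_increasing[OF int mono lim bnd])
  have "(\<lambda>N. integral {0..1} (F N)) = (\<lambda>N. exp 1 * (\<Sum>i<N. bcoef (i + 2)))"
    using FI integral_unique by blast
  moreover have "(\<lambda>N. exp 1 * (\<Sum>i<N. bcoef (i + 2))) \<longlonglongrightarrow> exp 1 * (1/2 - exp (-1))"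
    by (intro tendsto_mult_left) (use btail in \<open>simp add: sums_def\<close>)
  ultimately have "integral {0..1} (\<lambda>t. gfun t / t) = exp 1 * (1/2 - exp (-1))"
    using mct LIMSEQ_unique by metis
  also have "\<dots> = exp 1 / 2 - 1" by (simp add: right_diff_distrib exp_minus field_simps)
  finally show ?thesis using mct integrable_integral by metis
qed


definition G :: "real \<Rightarrow> real" where "G t = gfun t / t"

lemma G_nonneg: "0 \<le> G t"
proof (cases "0 < t")
  case True then show ?thesis using gfun_nonneg[of t] by (simp add: G_def)
next
  case False then have "gfun t = 0" by (simp add: gfun_def)
  then show ?thesis by (simp add: G_def)
qed

lemma gfun_le: assumes "0 \<le> t" shows "gfun t \<le> t"
proof (cases "0 < t \<and> t < 1")
  case True
  have a: "t powr t \<le> 1" by (rule powr_le1) (use True in auto)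
  have b: "(1 - t) powr (1 - t) \<le> 1" by (rule powr_le1) (use True in auto)
  have s: "sin (pi * t) \<le> pi * t" by (rule sin_x_le_x) (use True in simp)
  have s0: "0 \<le> sin (pi * t)" by (rule sin_ge_zero) (use True in auto)
  have "t powr t * (1 - t) powr (1 - t) * sin (pi * t) \<le> 1 * 1 * (pi * t)"
    by (intro mult_mono a b s) (auto simp: s0)
  then have "(1 / pi) * (t powr t * (1 - t) powr (1 - t) * sin (pi * t)) \<le> (1 / pi) * (pi * t)"
    by (intro mult_left_mono) auto
  then show ?thesis using True by (simp add: gfun_def mult.assoc)
next
  case False then show ?thesis using assms by (auto simp: gfun_def)
qed

lemma G_le1: assumes "0 \<le> t" shows "G t \<le> 1"
proof (cases "t = 0")
  case True then show ?thesis by (simp add: G_def)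
next
  case False then have "0 < t" using assms by simp
  then show ?thesis using gfun_le[OF assms] by (simp add: G_def divide_le_eq)
qed

lemma gfun_lower: assumes t: "1/2 \<le> t" "t \<le> 3/4" shows "7/160 \<le> gfun t"
proof -
  have t0: "0 < t" "t < 1" using t by auto
  have a: "1/2 \<le> t powr t"
  proof -
    have "t powr 1 \<le> t powr t" by (rule powr_mono') (use t0 in auto)
    then show ?thesis using t t0 by simp
  qed
  have b: "1/2 \<le> (1 - t) powr (1 - t)"
  proof -
    have "(1 - t) powr (1/2) \<le> (1 - t) powr (1 - t)" by (rule powr_mono') (use t in auto)
    moreover have "(1 - t) powr (1/2) = sqrt (1 - t)" by (rule powr_half_sqrt) (use t in auto)
    moreover have "sqrt (1/4) \<le> sqrt (1 - t)" using t by simp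
    moreover have "sqrt (1/4) = 1/2" by (simp add: real_sqrt_divide)
    ultimately show ?thesis by linarith
  qed
  have c: "7/10 \<le> sin (pi * t)"
  proof -
    have e: "sin (pi * t) = sin (pi * (1 - t))" by (simp add: right_diff_distrib sin_diff)
    have "sin (pi / 4) \<le> sin (pi * (1 - t))"
      by (rule sin_monotone_2pi_le) (use t pi_gt_zero in \<open>auto simp: field_simps\<close>)
    moreover have "sin (pi / 4) = sqrt 2 / 2" by (rule sin_45)
    moreover have "7/5 \<le> sqrt 2" by (rule real_le_rsqrt) (simp add: power2_eq_square)
    ultimately show ?thesis using e by linarith
  qed
  have p: "1/4 \<le> 1 / pi" using pi_less_4 pi_gt_zero by (simp add: divide_simps)
  have "(1/4) * (1/2) * (1/2) * (7/10) \<le> (1 / pi) * t powr t * (1 - t) powr (1 - t) * sin (pi * t)"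
    by (intro mult_mono p a b c) auto
  then show ?thesis using t0 by (simp add: gfun_def)
qed

lemma G_lower: assumes "1/2 \<le> t" "t \<le> 3/4" shows "7/160 \<le> G t"
proof -
  have "gfun t \<le> gfun t / t" using assms gfun_nonneg[of t] by (simp add: le_divide_eq mult_left_le)
  then have "gfun t \<le> G t" by (simp add: G_def)
  then show ?thesis using gfun_lower[OF assms] by linarith
qed

lemma G_int: "(G has_integral (exp 1 / 2 - 1)) {0..1}"
  unfolding G_def[abs_def] by (rule J_integral)

lemma Gq_int: assumes "continuous_on {0..1} q" shows "(\<lambda>t. q t * G t) integrable_on {0..1}"
proof -
  have "G absolutely_integrable_on {0..1}"
    by (rule nonnegative_absolutely_integrable) (use G_int G_nonneg in auto)
  moreover have "q \<in> borel_measurable (lebesgue_on {0..1})"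
    by (rule continuous_imp_measurable_on_sets_lebesgue[OF assms]) auto
  moreover have "bounded (q ` {0..1})"
    by (rule compact_imp_bounded, rule compact_continuous_image[OF assms]) auto
  ultimately have "(\<lambda>t. q t * G t) absolutely_integrable_on {0..1}"
    by (intro absolutely_integrable_bounded_measurable_product_real) auto
  then show ?thesis using absolutely_integrable_on_def by blast
qed

definition Bq :: "(real \<Rightarrow> real) \<Rightarrow> real" where
  "Bq q = q 0 + integral {0..1} (\<lambda>t. q t * G t)"

lemma Bq_cong: assumes "\<And>t. t \<in> {0..1} \<Longrightarrow> q t = r t" shows "Bq q = Bq r"
proof -
  have "q 0 = r 0" using assms[of 0] by simp
  moreover have "integral {0..1} (\<lambda>t. q t * G t) = integral {0..1} (\<lambda>t. r t * G t)"
    by (rule integral_cong) (simp add: assms)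
  ultimately show ?thesis by (simp add: Bq_def)
qed

lemma Bq_sum:
  assumes "finite K" "\<And>k. k \<in> K \<Longrightarrow> continuous_on {0..1} (f k)"
  shows "Bq (\<lambda>t. \<Sum>k\<in>K. f k t) = (\<Sum>k\<in>K. Bq (f k))"
proof -
  have "integral {0..1} (\<lambda>t. (\<Sum>k\<in>K. f k t) * G t) = integral {0..1} (\<lambda>t. \<Sum>k\<in>K. f k t * G t)"
    by (simp add: sum_distrib_right)
  also have "\<dots> = (\<Sum>k\<in>K. integral {0..1} (\<lambda>t. f k t * G t))"
    by (rule integral_sum[OF assms(1)]) (rule Gq_int[OF assms(2)])
  finally show ?thesis by (simp add: Bq_def sum.distrib)
qed

lemma Bq_cmult: assumes "continuous_on {0..1} q" shows "Bq (\<lambda>t. a * q t) = a * Bq q"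
proof -
  have "integral {0..1} (\<lambda>t. (a * q t) * G t) = integral {0..1} (\<lambda>t. a * (q t * G t))"
    by (simp add: mult.assoc)
  also have "\<dots> = a * integral {0..1} (\<lambda>t. q t * G t)" by simp
  finally show ?thesis by (simp add: Bq_def algebra_simps)
qed

lemma Bq_diff: assumes "continuous_on {0..1} q" "continuous_on {0..1} r"
  shows "Bq (\<lambda>t. q t - r t) = Bq q - Bq r"
proof -
  have "integral {0..1} (\<lambda>t. (q t - r t) * G t) = integral {0..1} (\<lambda>t. q t * G t - r t * G t)"
    by (simp add: left_diff_distrib)
  also have "\<dots> = integral {0..1} (\<lambda>t. q t * G t) - integral {0..1} (\<lambda>t. r t * G t)"
    by (rule integral_diff[OF Gq_int[OF assms(1)] Gq_int[OF assms(2)]])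
  finally show ?thesis by (simp add: Bq_def)
qed

lemma Bq_one: "Bq (\<lambda>t. 1) = exp 1 / 2"
  using G_int by (simp add: Bq_def integral_unique)

lemma Bq_pow: "exp 1 * bcoef (k + 1) = Bq (\<lambda>t. t ^ k)"
proof (cases k)
  case 0 then show ?thesis using Bq_one by simp
next
  case (Suc j)
  have "integral {0..1} (\<lambda>t. t ^ k * G t) = integral {0..1} (\<lambda>t. gfun t * t ^ j)"
  proof (rule integral_cong)
    fix t :: real assume t: "t \<in> {0..1}"
    show "t ^ k * G t = gfun t * t ^ j"
    proof (cases "t = 0")
      case True then show ?thesis by (simp add: Suc G_def gfun_def)
    next
      case False then show ?thesis by (simp add: Suc G_def)
    qed
  qed
  also have "\<dots> = exp 1 * bcoef (j + 2)" using moments[of j] by (rule integral_unique)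
  finally show ?thesis by (simp add: Bq_def Suc)
qed

lemma Bq_d: assumes "1 \<le> k" shows "exp 1 * dcoef k = Bq (\<lambda>t. (t - 1/12) ^ (k - 1))"
proof (cases "k = 1")
  case True then show ?thesis using Bq_one by (simp add: dcoef_def)
next
  case False
  then have k: "k \<noteq> 0" "k \<noteq> 1" using assms by auto
  define j where "j = k - 1"
  have "integral {0..1} (\<lambda>t. (12 * t - 1) ^ (k - 1) / t * gfun t) =
        integral {0..1} (\<lambda>t. 12 ^ j * ((t - 1/12) ^ j * G t))"
  proof (rule integral_cong)
    fix t :: real
    have e: "12 * t - 1 = 12 * (t - 1/12)" by simp
    have "(12 * t - 1) ^ j = (12 * (t - 1/12)) ^ j" by (simp only: e)
    also have "\<dots> = 12 ^ j * (t - 1/12) ^ j" by (rule power_mult_distrib)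
    finally have "(12 * t - 1) ^ j = 12 ^ j * (t - 1/12) ^ j" .
    then show "(12 * t - 1) ^ (k - 1) / t * gfun t = 12 ^ j * ((t - 1/12) ^ j * G t)"
      by (simp add: j_def G_def)
  qed
  also have "\<dots> = 12 ^ j * integral {0..1} (\<lambda>t. (t - 1/12) ^ j * G t)" by simp
  finally have I: "integral {0..1} (\<lambda>t. (12 * t - 1) ^ (k - 1) / t * gfun t) = 12 ^ j * integral {0..1} (\<lambda>t. (t - 1/12) ^ j * G t)" .
  have dk: "dcoef k = (1 / (12 ^ (k - 1) * exp 1)) * ((-1) ^ (k - 1) + integral {0..1} (\<lambda>t. (12 * t - 1) ^ (k - 1) / t * gfun t))"
    unfolding dcoef_def using k by simp
  have "exp 1 * dcoef k = (1 / 12 ^ j) * ((-1) ^ j + 12 ^ j * integral {0..1} (\<lambda>t. (t - 1/12) ^ j * G t))"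
    unfolding dk I by (simp add: j_def)
  also have "\<dots> = (-1) ^ j / 12 ^ j + integral {0..1} (\<lambda>t. (t - 1/12) ^ j * G t)"
    by (simp add: field_simps)
  also have "(-1) ^ j / 12 ^ j = (0 - 1/12 :: real) ^ j"
  proof -
    have "(0 - 1/12 :: real) = (-1) / 12" by simp
    then show ?thesis by (simp only: power_divide)
  qed
  finally show ?thesis by (simp add: Bq_def j_def)
qed


lemma alg_id:
  fixes t y c A B :: real
  assumes c: "0 < c" and y: "c < y" and t: "t < y"
  shows "(1 / (y - c)) * ((B - 1) / ((t - c) / (y - c) - 1)) - (1 / y) * ((A - 1) / (t / y - 1))
       = (c / (y * (y - c))) * ((A - B) / (t / y - (t - c) / (y - c)))"
proof -
  have z: "y - c \<noteq> 0" "y \<noteq> 0" "y - t \<noteq> 0" using assms by auto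
  have e1: "(t - c) / (y - c) - 1 = (t - y) / (y - c)" using z by (simp add: field_simps)
  have e2: "t / y - 1 = (t - y) / y" using z by (simp add: field_simps)
  have e3: "t / y - (t - c) / (y - c) = c * (y - t) / (y * (y - c))" using z by (simp add: field_simps)
  have h1: "(1 / w) * (X / (s / w)) = X / s" if "w \<noteq> 0" for w s X :: real
    using that by (simp add: divide_divide_eq_right)
  have h2: "(c / q) * (X / (c * s / q)) = X / s" if "q \<noteq> 0" for q s X :: real
    using that c by (simp add: divide_divide_eq_right)
  have f1: "(1 / (y - c)) * ((B - 1) / ((t - y) / (y - c))) = (B - 1) / (t - y)" by (rule h1) (use z in simp)
  have f2: "(1 / y) * ((A - 1) / ((t - y) / y)) = (A - 1) / (t - y)" by (rule h1) (use z in simp)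
  have f3: "(c / (y * (y - c))) * ((A - B) / (c * (y - t) / (y * (y - c)))) = (A - B) / (y - t)"
    by (rule h2) (use z in simp)
  have f4: "(B - 1) / (t - y) - (A - 1) / (t - y) = (A - B) / (y - t)"
  proof -
    have "(B - 1) / (t - y) - (A - 1) / (t - y) = ((B - 1) - (A - 1)) / (t - y)" by (rule diff_divide_distrib[symmetric])
    also have "\<dots> = (B - A) / (t - y)" by simp
    also have "\<dots> = (A - B) / (y - t)" by (metis minus_diff_eq minus_divide_divide)
    finally show ?thesis .
  qed
  show ?thesis unfolding e1 e2 e3 f1 f2 f3 f4 ..
qed

lemma P_closed:
  fixes t y c :: real
  assumes c: "0 < c" and y: "c < y" and t: "t < y"
  shows "(\<Sum>k=1..m. (1 / (y - c) ^ k) * (t - c) ^ (k - 1) - (1 / y ^ k) * t ^ (k - 1))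
       = (c / (y * (y - c))) * (\<Sum>i<m. ((t - c) / (y - c)) ^ (m - Suc i) * (t / y) ^ i)"
proof -
  define z where "z = y - c"
  define a where "a = t / y"
  define b where "b = (t - c) / z"
  have z0: "0 < z" using y by (simp add: z_def)
  have y0: "0 < y" using c y by simp
  have a1: "a \<noteq> 1" using t y0 by (simp add: a_def)
  have b1: "b \<noteq> 1" using t z0 by (simp add: b_def z_def)
  have ab: "a - b \<noteq> 0"
  proof -
    have "a - b = c * (y - t) / (y * z)" using z0 y0 by (simp add: a_def b_def z_def field_simps)
    then show ?thesis using c t z0 y0 by simp
  qed
  have sh: "(\<Sum>k=1..m. f k) = (\<Sum>i<m. f (Suc i))" for f :: "nat \<Rightarrow> real"
    using sum.atLeast1_atMost_eq[of f m] by (simp add: One_nat_def)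
  have "(\<Sum>k=1..m. (1 / z ^ k) * (t - c) ^ (k - 1) - (1 / y ^ k) * t ^ (k - 1))
      = (\<Sum>i<m. (1 / z) * b ^ i - (1 / y) * a ^ i)"
    unfolding sh by (rule sum.cong[OF refl]) (simp add: a_def b_def power_divide)
  also have "\<dots> = (1 / z) * (\<Sum>i<m. b ^ i) - (1 / y) * (\<Sum>i<m. a ^ i)"
    by (simp add: sum_subtractf sum_distrib_left)
  also have "\<dots> = (1 / z) * ((b ^ m - 1) / (b - 1)) - (1 / y) * ((a ^ m - 1) / (a - 1))"
    by (simp add: geometric_sum a1 b1)
  also have "\<dots> = (c / (y * z)) * ((a ^ m - b ^ m) / (a - b))"
    unfolding a_def b_def z_def by (rule alg_id[OF c y t])
  also have "(a ^ m - b ^ m) / (a - b) = (\<Sum>i<m. b ^ (m - Suc i) * a ^ i)"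
    using ab by (simp add: power_diff_sumr2)
  finally show ?thesis by (simp add: z_def a_def b_def)
qed


definition Qf :: "real \<Rightarrow> nat \<Rightarrow> real \<Rightarrow> real" where
  "Qf y m t = (\<Sum>i<m. ((t - 1/12) / (y - 1/12)) ^ (m - Suc i) * (t / y) ^ i)"

lemma cont_Qf: assumes "1 < y" shows "continuous_on {0..1} (Qf y m)"
  unfolding Qf_def using assms by (intro continuous_intros) auto

lemma Qf0: assumes "1 \<le> m" shows "Qf y m 0 = (- (1/12) / (y - 1/12)) ^ (m - 1)"
proof -
  obtain m' where m: "m = Suc m'" using assms by (cases m) auto
  have "Qf y m 0 = (\<Sum>i<Suc m'. ((0 - 1/12) / (y - 1/12)) ^ (m - Suc i) * (0 / y) ^ i)"
    by (simp add: Qf_def m)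
  also have "\<dots> = ((0 - 1/12) / (y - 1/12)) ^ (m - Suc 0) * (0 / y) ^ 0 +
      (\<Sum>i<m'. ((0 - 1/12) / (y - 1/12)) ^ (m - Suc (Suc i)) * (0 / y) ^ Suc i)"
    by (rule sum.lessThan_Suc_shift)
  also have "\<dots> = (- (1/12) / (y - 1/12)) ^ (m - 1)" by simp
  finally show ?thesis .
qed

lemma bcoef2: "bcoef 2 = 1/24"
  by (simp add: numeral_2_eq_2 bcoef.simps)

lemma Bq_Qf_odd:
  assumes y: "1 < y" and m: "odd m"
  shows "0 < Bq (Qf y m)"
proof -
  define c :: real where "c = 1/12"
  define z where "z = y - c"
  have z0: "0 < z" using y by (simp add: z_def c_def)
  have y0: "0 < y" using y by simp
  have nn: "0 \<le> Qf y m t" if t: "t \<in> {0..1}" for t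
  proof -
    define a where "a = t / y"
    define b where "b = (t - c) / z"
    have "a - b = c * (y - t) / (y * z)" using z0 y0 by (simp add: a_def b_def z_def field_simps)
    moreover have "0 < c * (y - t) / (y * z)" using t y z0 y0 by (simp add: c_def)
    ultimately have ab: "0 < a - b" by simp
    have "b ^ m \<le> a ^ m" by (rule power_mono_odd[OF m]) (use ab in simp)
    moreover have "a ^ m - b ^ m = (a - b) * Qf y m t"
      by (simp add: power_diff_sumr2 Qf_def a_def b_def z_def c_def)
    ultimately have "0 \<le> (a - b) * Qf y m t" by simp
    then show ?thesis using ab by (simp add: zero_le_mult_iff)
  qed
  have q0: "0 < Qf y m 0"
  proof -
    have m1: "1 \<le> m" using m by (cases m) auto
    have "even (m - 1)" using m m1 by simp
    moreover have "- (1/12) / (y - 1/12) \<noteq> (0::real)" using y by simp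
    ultimately show ?thesis unfolding Qf0[OF m1] by (simp add: zero_less_power_eq)
  qed
  have "0 \<le> integral {0..1} (\<lambda>t. Qf y m t * G t)"
    by (rule integral_nonneg[OF Gq_int[OF cont_Qf[OF y]]]) (use nn G_nonneg in simp)
  then show ?thesis using q0 by (simp add: Bq_def)
qed

lemma Bq_Qf_2:
  assumes y: "1 < y"
  shows "0 < Bq (Qf y 2)"
proof -
  define z where "z = y - 1/12"
  have z0: "0 < z" using y by (simp add: z_def)
  have "Bq (Qf y 2) = Bq (\<lambda>t. (1/z + 1/y) * t ^ 1 - (1/(12 * z)) * t ^ 0)"
  proof (rule Bq_cong)
    fix t :: real
    have q: "Qf y 2 t = (t - 1/12) / (y - 1/12) + t / y" by (simp add: Qf_def numeral_2_eq_2)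
    have e: "(t - 1/12) / (y - 1/12) = t / z - 1 / (12 * z)" unfolding z_def by (simp add: diff_divide_distrib)
    show "Qf y 2 t = (1/z + 1/y) * t ^ 1 - (1/(12 * z)) * t ^ 0"
      unfolding q e by (simp add: distrib_right)
  qed
  also have "\<dots> = (1/z + 1/y) * Bq (\<lambda>t. t ^ 1) - (1/(12 * z)) * Bq (\<lambda>t. t ^ 0)"
    by (simp only: Bq_diff Bq_cmult continuous_intros)
  also have "Bq (\<lambda>t. t ^ 1) = exp 1 * bcoef 2" using Bq_pow[of 1] by (simp add: numeral_2_eq_2)
  also have "Bq (\<lambda>t. t ^ 0) = exp 1 * bcoef 1" using Bq_pow[of 0] by simp
  finally have "Bq (Qf y 2) = (1/z + 1/y) * (exp 1 / 24) - (1/(12 * z)) * (exp 1 / 2)"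
    by (simp add: bcoef2)
  also have "\<dots> = exp 1 / (24 * y)" using z0 y by (simp add: field_simps)
  also have "\<dots> > 0" using y by simp
  finally show ?thesis .
qed


lemma indicator_integral:
  fixes a b v :: real
  assumes "0 \<le> a" "a \<le> b" "b \<le> 1"
  shows "((\<lambda>t. if t \<in> {a..b} then v else 0) has_integral ((b - a) * v)) {0..1}"
proof -
  have "((\<lambda>t. v) has_integral ((b - a) * v)) {a..b}"
    using has_integral_const_real[of v a b] assms by simp
  then have "((\<lambda>t. if t \<in> {a..b} then v else 0) has_integral ((b - a) * v)) {a..b}"
    by (rule has_integral_eq[rotated]) simp
  then show ?thesis by (rule has_integral_on_superset) (use assms in auto)
qed

lemma Bq_Qf_even:
  assumes y: "1 < y" and m: "even m" "4 \<le> m"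
  shows "0 < Bq (Qf y m)"
proof -
  define c :: real where "c = 1/12"
  define z where "z = y - c"
  have z0: "0 < z" using y by (simp add: z_def c_def)
  have y0: "0 < y" using y by simp
  have zy: "z \<le> y" by (simp add: z_def c_def)
  define \<alpha> where "\<alpha> = real m * (c / z) ^ (m - 1)"
  define \<beta> where "\<beta> = (7/160) * (1 / (2 * y)) ^ (m - 1)"
  define \<phi> where "\<phi> = (\<lambda>t::real. (if t \<in> {0..c} then - \<alpha> else 0) + (if t \<in> {1/2..3/4} then \<beta> else 0))"
  have Qdef: "Qf y m t = (\<Sum>i<m. ((t - c) / z) ^ (m - Suc i) * (t / y) ^ i)" for t
    by (simp add: Qf_def z_def c_def)
  have phi_int: "(\<phi> has_integral ((c - 0) * (- \<alpha>) + (3/4 - 1/2) * \<beta>)) {0..1}"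
    unfolding \<phi>_def by (intro has_integral_add indicator_integral) (simp_all add: c_def)
  have pw: "\<phi> t \<le> Qf y m t * G t" if t: "t \<in> {0..1}" for t
  proof (cases "t \<le> c")
    case True
    have ph: "\<phi> t = - \<alpha>" using True t by (simp add: \<phi>_def c_def)
    have ba: "\<bar>(t - c) / z\<bar> \<le> c / z"
    proof -
      have "\<bar>(t - c) / z\<bar> = \<bar>t - c\<bar> / z" using z0 by (simp add: abs_divide)
      also have "\<bar>t - c\<bar> = c - t" using True by simp
      also have "(c - t) / z \<le> c / z" using t z0 by (intro divide_right_mono) auto
      finally show ?thesis .
    qed
    have aa: "\<bar>t / y\<bar> \<le> c / z"
    proof -
      have "\<bar>t / y\<bar> = t / y" using t y0 by simp
      also have "\<dots> \<le> c / y" using True y0 by (simp add: divide_right_mono)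
      also have "\<dots> \<le> c / z" using zy z0 by (simp add: c_def frac_le)
      finally show ?thesis .
    qed
    have trm: "\<bar>((t - c) / z) ^ (m - Suc i) * (t / y) ^ i\<bar> \<le> (c / z) ^ (m - 1)" if i: "i < m" for i
    proof -
      have "\<bar>((t - c) / z) ^ (m - Suc i) * (t / y) ^ i\<bar> = \<bar>(t - c) / z\<bar> ^ (m - Suc i) * \<bar>t / y\<bar> ^ i"
        by (simp add: abs_mult power_abs)
      also have "\<dots> \<le> (c / z) ^ (m - Suc i) * (c / z) ^ i"
        by (intro mult_mono power_mono ba aa) (use z0 in \<open>auto simp: c_def\<close>)
      also have "\<dots> = (c / z) ^ (m - 1)" using i by (simp flip: power_add)
      finally show ?thesis .
    qed
    have "\<bar>Qf y m t\<bar> \<le> (\<Sum>i<m. \<bar>((t - c) / z) ^ (m - Suc i) * (t / y) ^ i\<bar>)"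
      unfolding Qdef by (rule sum_abs)
    also have "\<dots> \<le> (\<Sum>i<m. (c / z) ^ (m - 1))" by (rule sum_mono) (use trm in simp)
    also have "\<dots> = \<alpha>" by (simp add: \<alpha>_def)
    finally have qa: "\<bar>Qf y m t\<bar> \<le> \<alpha>" .
    have g: "0 \<le> G t" "G t \<le> 1" using G_nonneg G_le1 t by auto
    have "- \<alpha> \<le> - \<bar>Qf y m t\<bar>" using qa by simp
    also have "- \<bar>Qf y m t\<bar> \<le> - \<bar>Qf y m t\<bar> * G t" using g by (simp add: mult_left_le)
    also have "\<dots> \<le> Qf y m t * G t" using g by (simp add: mult_right_mono abs_if)
    finally show ?thesis using ph by simp
  next
    case False
    then have tc: "c < t" by simp
    have a0: "0 \<le> t / y" using t y0 by simp
    have b0: "0 \<le> (t - c) / z" using tc z0 by simp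
    have qge: "(t / y) ^ (m - 1) \<le> Qf y m t"
    proof -
      have "((t - c) / z) ^ (m - Suc (m - 1)) * (t / y) ^ (m - 1) \<le> (\<Sum>i<m. ((t - c) / z) ^ (m - Suc i) * (t / y) ^ i)"
        by (rule member_le_sum) (use a0 b0 m in auto)
      moreover have "m - Suc (m - 1) = 0" using m by simp
      ultimately show ?thesis unfolding Qdef by simp
    qed
    have g0: "0 \<le> G t" by (rule G_nonneg)
    show ?thesis
    proof (cases "t \<in> {1/2..3/4}")
      case True
      have ph: "\<phi> t = \<beta>" using True tc by (simp add: \<phi>_def c_def)
      have "1 / (2 * y) \<le> t / y" using True y0 by (simp add: field_simps)
      then have "(1 / (2 * y)) ^ (m - 1) \<le> (t / y) ^ (m - 1)" by (rule power_mono) (use y0 in simp)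
      then have q1: "(1 / (2 * y)) ^ (m - 1) \<le> Qf y m t" using qge by linarith
      have g1: "7/160 \<le> G t" using True by (intro G_lower) auto
      have "(1 / (2 * y)) ^ (m - 1) * (7/160) \<le> Qf y m t * G t"
        by (rule mult_mono[OF q1 g1]) (use qge a0 in \<open>auto intro: order.trans[OF zero_le_power]\<close>)
      then show ?thesis using ph by (simp add: \<beta>_def mult.commute)
    next
      case False
      have ph: "\<phi> t = 0" using False tc by (auto simp: \<phi>_def c_def)
      have "0 \<le> Qf y m t" using qge a0 by (meson order.trans zero_le_power)
      then show ?thesis using ph g0 by simp
    qed
  qed
  have ile: "integral {0..1} \<phi> \<le> integral {0..1} (\<lambda>t. Qf y m t * G t)"
    by (rule integral_le[OF has_integral_integrable[OF phi_int] Gq_int[OF cont_Qf[OF y]] pw])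
  have iphi: "integral {0..1} \<phi> = - c * \<alpha> + \<beta> / 4" using phi_int by (simp add: integral_unique)
  have m1: "1 \<le> m" "odd (m - 1)" using m by auto
  have q0: "Qf y m 0 = - ((c / z) ^ (m - 1))"
    unfolding Qf0[OF m1(1)] using m1(2) by (simp add: z_def c_def power_minus_odd)
  define v where "v = (1 / (2 * y)) ^ (m - 1)"
  define r where "r = y / (6 * z)"
  have v0: "0 < v" using y0 by (simp add: v_def)
  have r0: "0 \<le> r" using y0 z0 by (simp add: r_def)
  have r1: "r \<le> 2/11" using y z0 by (simp add: r_def z_def c_def field_simps)
  have cz: "c / z = (1 / (2 * y)) * r" using y0 z0 by (simp add: r_def c_def field_simps)
  have w: "(c / z) ^ (m - 1) = v * r ^ (m - 1)" unfolding cz v_def by (rule power_mult_distrib)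
  have bern: "1 + real m * c \<le> (13/12) ^ m"
    using Bernoulli_inequality[of "1/12::real" m] by (simp add: c_def)
  have rp: "r ^ (m - 1) \<le> (2/11) ^ (m - 1)" by (rule power_mono[OF r1 r0])
  have "(1 + real m * c) * r ^ (m - 1) \<le> (13/12) ^ m * (2/11) ^ (m - 1)"
    by (rule mult_mono[OF bern rp]) (use r0 in auto)
  also have "(13/12::real) ^ m * (2/11) ^ (m - 1) = (13/12) * (13/66) ^ (m - 1)"
  proof -
    have "m = Suc (m - 1)" using m1 by simp
    then have e: "(13/12::real) ^ m = (13/12) * (13/12) ^ (m - 1)" by (metis power_Suc)
    have f: "(13/12::real) ^ (m - 1) * (2/11) ^ (m - 1) = (13/66) ^ (m - 1)"
      by (simp flip: power_mult_distrib)
    show ?thesis unfolding e by (simp only: mult.assoc f)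
  qed
  also have "\<dots> \<le> (13/12) * (13/66) ^ 3"
    by (intro mult_left_mono power_decreasing) (use m in auto)
  also have "\<dots> < 7/640" by (simp add: power3_eq_cube)
  finally have est: "(1 + real m * c) * r ^ (m - 1) < 7/640" .
  have "Bq (Qf y m) = Qf y m 0 + integral {0..1} (\<lambda>t. Qf y m t * G t)" by (simp add: Bq_def)
  also have "\<dots> \<ge> - ((c / z) ^ (m - 1)) + (- c * \<alpha> + \<beta> / 4)" using ile iphi q0 by simp
  finally have "- ((c / z) ^ (m - 1)) + (- c * \<alpha> + \<beta> / 4) \<le> Bq (Qf y m)" .
  moreover have "- ((c / z) ^ (m - 1)) + (- c * \<alpha> + \<beta> / 4) = v * (7/640 - (1 + real m * c) * r ^ (m - 1))"
    unfolding \<alpha>_def \<beta>_def w by (simp add: v_def algebra_simps)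
  moreover have "0 < v * (7/640 - (1 + real m * c) * r ^ (m - 1))" using v0 est by simp
  ultimately show ?thesis by linarith
qed


lemma Bq_Qf_pos: assumes "1 < y" "1 \<le> m" shows "0 < Bq (Qf y m)"
proof (cases "odd m")
  case True then show ?thesis by (rule Bq_Qf_odd[OF assms(1)])
next
  case False
  show ?thesis
  proof (cases "m = 2")
    case True then show ?thesis using Bq_Qf_2[OF assms(1)] by simp
  next
    case m2: False
    have "m \<noteq> 1" "m \<noteq> 3" using False by auto
    then have "4 \<le> m" using assms(2) m2 by linarith
    then show ?thesis using Bq_Qf_even[OF assms(1)] False by simp
  qed
qed

theorem theorem2:
  fixes x :: real and m :: nat
  assumes "x > 0" and "m \<ge> 1"
  shows "(\<Sum>k=1..m. dcoef k / (x + 11/12) ^ k) > (\<Sum>k=1..m. bcoef k / (1 + x) ^ k)"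
proof -
  define y where "y = 1 + x"
  define c :: real where "c = 1/12"
  have y: "1 < y" using assms by (simp add: y_def)
  have zq: "x + 11/12 = y - c" by (simp add: y_def c_def)
  define P where "P = (\<lambda>t. \<Sum>k=1..m. (1 / (y - c) ^ k) * (t - c) ^ (k - 1) - (1 / y ^ k) * t ^ (k - 1))"
  have cont1: "continuous_on {0..1} (\<lambda>t::real. (t - c) ^ j)" for j by (intro continuous_intros)
  have cont2: "continuous_on {0..1} (\<lambda>t::real. t ^ j)" for j by (intro continuous_intros)
  have "Bq P = (\<Sum>k=1..m. Bq (\<lambda>t. (1 / (y - c) ^ k) * (t - c) ^ (k - 1) - (1 / y ^ k) * t ^ (k - 1)))"
    unfolding P_def by (rule Bq_sum) (use y in \<open>auto intro!: continuous_intros simp: c_def\<close>)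
  also have "\<dots> = (\<Sum>k=1..m. (1 / (y - c) ^ k) * (exp 1 * dcoef k) - (1 / y ^ k) * (exp 1 * bcoef k))"
  proof (rule sum.cong[OF refl])
    fix k assume k: "k \<in> {1..m}"
    have "Bq (\<lambda>t. (1 / (y - c) ^ k) * (t - c) ^ (k - 1) - (1 / y ^ k) * t ^ (k - 1))
        = (1 / (y - c) ^ k) * Bq (\<lambda>t. (t - c) ^ (k - 1)) - (1 / y ^ k) * Bq (\<lambda>t. t ^ (k - 1))"
      by (simp only: Bq_diff Bq_cmult cont1 cont2 continuous_on_mult_left)
    also have "Bq (\<lambda>t. (t - c) ^ (k - 1)) = exp 1 * dcoef k" using Bq_d[of k] k by (simp add: c_def)
    also have "Bq (\<lambda>t. t ^ (k - 1)) = exp 1 * bcoef k" using Bq_pow[of "k - 1"] k by simp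
    finally show "Bq (\<lambda>t. (1 / (y - c) ^ k) * (t - c) ^ (k - 1) - (1 / y ^ k) * t ^ (k - 1))
        = (1 / (y - c) ^ k) * (exp 1 * dcoef k) - (1 / y ^ k) * (exp 1 * bcoef k)" .
  qed
  also have "\<dots> = exp 1 * ((\<Sum>k=1..m. dcoef k / (x + 11/12) ^ k) - (\<Sum>k=1..m. bcoef k / (1 + x) ^ k))"
    by (simp add: zq y_def[symmetric] sum_subtractf sum_distrib_left field_simps)
  finally have E: "exp 1 * ((\<Sum>k=1..m. dcoef k / (x + 11/12) ^ k) - (\<Sum>k=1..m. bcoef k / (1 + x) ^ k)) = Bq P" ..
  have "Bq P = Bq (\<lambda>t. (c / (y * (y - c))) * Qf y m t)"
  proof (rule Bq_cong)
    fix t :: real assume t: "t \<in> {0..1}"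
    have ty: "t < y" using t y by simp
    show "P t = (c / (y * (y - c))) * Qf y m t"
      unfolding P_def Qf_def c_def by (rule P_closed) (use y ty in simp_all)
  qed
  also have "\<dots> = (c / (y * (y - c))) * Bq (Qf y m)" by (rule Bq_cmult[OF cont_Qf[OF y]])
  finally have "Bq P = (c / (y * (y - c))) * Bq (Qf y m)" .
  moreover have "0 < c / (y * (y - c))" using y by (simp add: c_def)
  moreover have "0 < Bq (Qf y m)" by (rule Bq_Qf_pos[OF y assms(2)])
  ultimately have "0 < Bq P" by (metis mult_pos_pos)
  then have "0 < exp 1 * ((\<Sum>k=1..m. dcoef k / (x + 11/12) ^ k) - (\<Sum>k=1..m. bcoef k / (1 + x) ^ k))"
    using E by simp
  then show ?thesis by (simp add: zero_less_mult_iff)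
qed

end
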